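(* Let $P\subseteq\{3,4,5,\ldots\}$ (so $\infty\notin P$). The family $\mathcal{G}_P$ satisfies the projective amalgamation property: for all $A,B,C\in\mathcal{G}_P$ and epimorphisms $f\colon B\to A$, $g\colon C\to A$ in $\mathcal{G}_P$ there exist $D\in\mathcal{G}_P$ and epimorphisms $h_1\colon D\to B$, $h_2\colon D\to C$ in $\mathcal{G}_P$ with $f\circ h_1=g\circ h_2$. Consequently $\mathcal{G}_P$ is a projective Fraïssé family.
   Context: Graphs are finite with reflexive symmetric edge relations. An epimorphism $f\colon B\to A$ is a surjection such that $\langle a_1,a_2\rangle$ is an edge of $A$ iff there are $b_i\in f^{-1}(a_i)$ forming an edge of $B$; it is monotone if every fibre induces a connected subgraph. A finite tree is a finite connected graph without cycles of nontrivial edges; $\mathrm{ord}(a)$ is the number of neighbours of $a$ other than itself. For a monotone epimorphism $f\colon B\to A$ of finite trees and $a\in A$ with $\mathrm{ord}(a)=n\ge3$, $a$ is a point of coherence of $f$ if there is $b\in f^{-1}(a)$ with $\mathrm{ord}(b)=n$ and a bijection $p$ between the components $A_0,\dots,A_{n-1}$ of $A\setminus\{a\}$ and the components of $B\setminus\{b\}$ with $f^{-1}(A_i)\subseteq p(A_i)$; $f$ is coherent if every vertex of order at least $3$ is a point of coherence. $\mathcal{G}_P$ is the class of finite trees each of whose vertices either is an endpoint (order at most $1$) or has order in $P$, with the monotone coherent epimorphisms between them. A projective Fraïssé family is a class of finite graphs with a distinguished class of epimorphisms, having countably many members up to isomorphism, containing identities, closed under composition, and satisfying joint projection (any two members are images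 of a common member under distinguished epimorphisms) and projective amalgamation. *)

theory Defs
  imports Main "HOL-Library.Countable_Set"
begin

text \<open>A finite graph: vertex set and a reflexive symmetric edge relation on it.
  Vertices are natural numbers (every finite graph is isomorphic to one of this form).\<close>
type_synonym graph = "nat set \<times> (nat \<times> nat) set"

definition verts :: "graph \<Rightarrow> nat set" where "verts G = fst G"
definition edges :: "graph \<Rightarrow> (nat \<times> nat) set" where "edges G = snd G"

definition is_graph :: "graph \<Rightarrow> bool" where
  "is_graph G \<longleftrightarrow> finite (verts G) \<and> edges G \<subseteq> verts G \<times> verts G
     \<and> (\<forall>v\<in>verts G. (v, v) \<in> edges G)
     \<and> (\<forall>u v. (u, v) \<in> edges G \<longrightarrow> (v, u) \<in> edges G)"

text \<open>Epimorphism \<open>f : B \<rightarrow> A\<close> (only its values on \<open>verts B\<close> matter).\<close>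
definition epi :: "graph \<Rightarrow> graph \<Rightarrow> (nat \<Rightarrow> nat) \<Rightarrow> bool" where
  "epi B A f \<longleftrightarrow> f ` verts B = verts A \<and>
     (\<forall>a1\<in>verts A. \<forall>a2\<in>verts A. (a1, a2) \<in> edges A \<longleftrightarrow>
        (\<exists>b1\<in>verts B. \<exists>b2\<in>verts B. f b1 = a1 \<and> f b2 = a2 \<and> (b1, b2) \<in> edges B))"

definition induced_rel :: "graph \<Rightarrow> nat set \<Rightarrow> (nat \<times> nat) set" where
  "induced_rel G S = edges G \<inter> (S \<times> S)"

definition connected_in :: "graph \<Rightarrow> nat set \<Rightarrow> bool" where
  "connected_in G S \<longleftrightarrow> S \<noteq> {} \<and> S \<subseteq> verts G \<and>
     (\<forall>x\<in>S. \<forall>y\<in>S. (x, y) \<in> (induced_rel G S)\<^sup>*)"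

definition components :: "graph \<Rightarrow> nat set \<Rightarrow> nat set set" where
  "components G S = {{y \<in> S. (x, y) \<in> (induced_rel G S)\<^sup>*} | x. x \<in> S}"

definition monotone_epi :: "graph \<Rightarrow> graph \<Rightarrow> (nat \<Rightarrow> nat) \<Rightarrow> bool" where
  "monotone_epi B A f \<longleftrightarrow> epi B A f \<and>
     (\<forall>a\<in>verts A. connected_in B {b \<in> verts B. f b = a})"

definition has_cycle :: "graph \<Rightarrow> bool" where
  "has_cycle G \<longleftrightarrow> (\<exists>vs. length vs \<ge> 3 \<and> distinct vs \<and> set vs \<subseteq> verts G \<and>
     (\<forall>i < length vs. (vs ! i, vs ! ((i + 1) mod length vs)) \<in> edges G))"

definition is_tree :: "graph \<Rightarrow> bool" where
  "is_tree G \<longleftrightarrow> is_graph G \<and> connected_in G (verts G) \<and> \<not> has_cycle G"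

definition ord :: "graph \<Rightarrow> nat \<Rightarrow> nat" where
  "ord G a = card {b \<in> verts G. b \<noteq> a \<and> (a, b) \<in> edges G}"

definition point_of_coherence :: "graph \<Rightarrow> graph \<Rightarrow> (nat \<Rightarrow> nat) \<Rightarrow> nat \<Rightarrow> bool" where
  "point_of_coherence B A f a \<longleftrightarrow> a \<in> verts A \<and> ord A a \<ge> 3 \<and>
     (\<exists>b\<in>verts B. f b = a \<and> ord B b = ord A a \<and>
        (\<exists>p. bij_betw p (components A (verts A - {a})) (components B (verts B - {b})) \<and>
             (\<forall>Ai\<in>components A (verts A - {a}). {x \<in> verts B. f x \<in> Ai} \<subseteq> p Ai)))"

definition coherent :: "graph \<Rightarrow> graph \<Rightarrow> (nat \<Rightarrow> nat) \<Rightarrow> bool" where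
  "coherent B A f \<longleftrightarrow> (\<forall>a\<in>verts A. ord A a \<ge> 3 \<longrightarrow> point_of_coherence B A f a)"

definition GP :: "nat set \<Rightarrow> graph set" where
  "GP P = {T. is_tree T \<and> (\<forall>v\<in>verts T. ord T v \<le> 1 \<or> ord T v \<in> P)}"

definition GP_mor :: "nat set \<Rightarrow> graph \<Rightarrow> graph \<Rightarrow> (nat \<Rightarrow> nat) \<Rightarrow> bool" where
  "GP_mor P B A f \<longleftrightarrow> B \<in> GP P \<and> A \<in> GP P \<and> monotone_epi B A f \<and> coherent B A f"

definition graph_iso :: "graph \<Rightarrow> graph \<Rightarrow> bool" where
  "graph_iso G H \<longleftrightarrow> (\<exists>h. bij_betw h (verts G) (verts H) \<and>
     (\<forall>x\<in>verts G. \<forall>y\<in>verts G. (x, y) \<in> edges G \<longleftrightarrow> (h x, h y) \<in> edges H))"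

definition proj_amalgamation :: "graph set \<Rightarrow> (graph \<Rightarrow> graph \<Rightarrow> (nat \<Rightarrow> nat) \<Rightarrow> bool) \<Rightarrow> bool" where
  "proj_amalgamation C M \<longleftrightarrow> (\<forall>A\<in>C. \<forall>B\<in>C. \<forall>C'\<in>C. \<forall>f g. M B A f \<and> M C' A g \<longrightarrow>
     (\<exists>D\<in>C. \<exists>h1 h2. M D B h1 \<and> M D C' h2 \<and> (\<forall>d\<in>verts D. f (h1 d) = g (h2 d))))"

definition proj_fraisse_family :: "graph set \<Rightarrow> (graph \<Rightarrow> graph \<Rightarrow> (nat \<Rightarrow> nat) \<Rightarrow> bool) \<Rightarrow> bool" where
  "proj_fraisse_family C M \<longleftrightarrow>
     (\<forall>G\<in>C. is_graph G) \<and>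
     (\<forall>B A f. M B A f \<longrightarrow> B \<in> C \<and> A \<in> C \<and> epi B A f) \<and>
     (\<exists>S. countable S \<and> S \<subseteq> C \<and> (\<forall>A\<in>C. \<exists>A'\<in>S. graph_iso A A')) \<and>
     (\<forall>A\<in>C. M A A id) \<and>
     (\<forall>A B D f g. M B A f \<and> M D B g \<longrightarrow> M D A (f \<circ> g)) \<and>
     (\<forall>A\<in>C. \<forall>B\<in>C. \<exists>D\<in>C. \<exists>f g. M D A f \<and> M D B g) \<and>
     proj_amalgamation C M"

end

theory Submission
  imports Defs "HOL-Library.Transitive_Closure_Table"
begin

fun ipath :: "('a \<times> 'a) set \<Rightarrow> 'a list \<Rightarrow> bool" where
  "ipath R [] = True"
| "ipath R [x] = True"
| "ipath R (x # y # ys) = ((x, y) \<in> R \<and> ipath R (y # ys))"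

lemma ipath_nth: "ipath R ys \<Longrightarrow> Suc i < length ys \<Longrightarrow> (ys ! i, ys ! Suc i) \<in> R"
proof (induction R ys arbitrary: i rule: ipath.induct)
  case (3 R x y ys)
  then show ?case by (cases i) auto
qed auto

lemma ipath_append:
  "ipath R (xs @ ys) \<longleftrightarrow> ipath R xs \<and> ipath R ys \<and> (xs \<noteq> [] \<longrightarrow> ys \<noteq> [] \<longrightarrow> (last xs, hd ys) \<in> R)"
proof (induction xs)
  case Nil then show ?case by simp
next
  case (Cons x xs)
  then show ?case by (cases xs; cases ys) auto
qed

lemma ipath_drop: "ipath R ys \<Longrightarrow> ipath R (drop k ys)"
  by (metis append_take_drop_id ipath_append)

lemma ipath_mono: "ipath R ys \<Longrightarrow> R \<subseteq> S \<Longrightarrow> ipath S ys"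
  by (induction R ys rule: ipath.induct) auto

lemma ipath_restrict: "ipath R ys \<Longrightarrow> set ys \<subseteq> S \<Longrightarrow> ipath (R \<inter> S \<times> S) ys"
  by (induction R ys rule: ipath.induct) auto

lemma ipath_rtrancl: "ipath R ys \<Longrightarrow> ys \<noteq> [] \<Longrightarrow> (hd ys, last ys) \<in> R\<^sup>*"
proof (induction R ys rule: ipath.induct)
  case (3 R x y ys)
  then show ?case by (auto intro: converse_rtrancl_into_rtrancl)
qed auto

lemma rtrancl_path_ipath: "rtrancl_path (\<lambda>a b. (a, b) \<in> R) x xs y \<Longrightarrow> ipath R (x # xs) \<and> last (x # xs) = y"
proof (induction rule: rtrancl_path.induct)
  case (base x) then show ?case by simp
next
  case (step x y ys z)
  then show ?case by (cases ys) auto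
qed

lemma rtrancl_distinct_ipath:
  assumes "(x, y) \<in> R\<^sup>*"
  obtains ys where "ys \<noteq> []" "hd ys = x" "last ys = y" "distinct ys" "ipath R ys"
proof -
  have "(\<lambda>a b. (a, b) \<in> R)\<^sup>*\<^sup>* x y" using assms by (simp add: rtranclp_rtrancl_eq)
  then obtain xs where "rtrancl_path (\<lambda>a b. (a, b) \<in> R) x xs y" by (auto simp: rtranclp_eq_rtrancl_path)
  then obtain xs' where p: "rtrancl_path (\<lambda>a b. (a, b) \<in> R) x xs' y" "distinct (x # xs')"
    by (rule rtrancl_path_distinct)
  from rtrancl_path_ipath[OF p(1)] p(2) show ?thesis by (intro that[of "x # xs'"]) auto
qed

lemma cycle_from_ipath:
  assumes "distinct ys" "3 \<le> length ys" "ipath (edges G) ys" "(last ys, hd ys) \<in> edges G"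
    "set ys \<subseteq> verts G"
  shows "has_cycle G"
  unfolding has_cycle_def
proof (intro exI[of _ ys] conjI allI impI)
  fix i assume i: "i < length ys"
  show "(ys ! i, ys ! ((i + 1) mod length ys)) \<in> edges G"
  proof (cases "Suc i < length ys")
    case True
    then show ?thesis using ipath_nth[OF assms(3) True] by simp
  next
    case False
    then have "i = length ys - 1" using i by simp
    moreover have "ys \<noteq> []" using assms(2) by auto
    then have "ys ! (length ys - 1) = last ys" by (simp add: last_conv_nth)
    moreover have "ys ! 0 = hd ys" using \<open>ys \<noteq> []\<close> by (simp add: hd_conv_nth)
    moreover have "Suc (length ys - Suc 0) = length ys" using assms(2) by simp
    ultimately show ?thesis using assms(2,4) i by simp
  qed
qed (use assms in auto)

definition nbrs :: "graph \<Rightarrow> nat \<Rightarrow> nat set" where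
  "nbrs G a = {b \<in> verts G. b \<noteq> a \<and> (a, b) \<in> edges G}"

lemma ord_nbrs: "ord G a = card (nbrs G a)"
  unfolding ord_def nbrs_def ..

definition cmp :: "graph \<Rightarrow> nat set \<Rightarrow> nat \<Rightarrow> nat set" where
  "cmp G S x = {y \<in> S. (x, y) \<in> (induced_rel G S)\<^sup>*}"

lemma components_comp: "components G S = cmp G S ` S"
  unfolding components_def cmp_def by auto

lemma is_graphD:
  assumes "is_graph G"
  shows "finite (verts G)" "\<And>x y. (x, y) \<in> edges G \<Longrightarrow> x \<in> verts G \<and> y \<in> verts G"
    "\<And>v. v \<in> verts G \<Longrightarrow> (v, v) \<in> edges G" "\<And>u v. (u, v) \<in> edges G \<Longrightarrow> (v, u) \<in> edges G"
  using assms unfolding is_graph_def by auto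

lemma finite_nbrs: "is_graph G \<Longrightarrow> finite (nbrs G a)"
  unfolding nbrs_def using is_graphD(1) by auto

lemma induced_mono: "S \<subseteq> T \<Longrightarrow> (x, y) \<in> (induced_rel G S)\<^sup>* \<Longrightarrow> (x, y) \<in> (induced_rel G T)\<^sup>*"
  by (rule rtrancl_mono[THEN subsetD]) (auto simp: induced_rel_def)

lemma induced_in: "(x, y) \<in> (induced_rel G S)\<^sup>* \<Longrightarrow> x = y \<or> (x \<in> S \<and> y \<in> S)"
  by (induction rule: rtrancl_induct) (auto simp: induced_rel_def)

lemma induced_sym: assumes "is_graph G" "(x, y) \<in> (induced_rel G S)\<^sup>*" shows "(y, x) \<in> (induced_rel G S)\<^sup>*"
  using assms(2)
proof (induction rule: rtrancl_induct)
  case (step y z)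
  then have "(z, y) \<in> induced_rel G S" using assms(1) by (auto simp: induced_rel_def dest: is_graphD(4))
  then show ?case using step by (meson converse_rtrancl_into_rtrancl)
qed auto

lemma induced_edge: "(x, y) \<in> edges G \<Longrightarrow> x \<in> S \<Longrightarrow> y \<in> S \<Longrightarrow> (x, y) \<in> (induced_rel G S)\<^sup>*"
  by (auto simp: induced_rel_def)

lemma exit_lemma:
  assumes "(x, y) \<in> (induced_rel G S)\<^sup>*" "x \<in> Q" "y \<notin> Q"
  shows "\<exists>s t. (x, s) \<in> (induced_rel G (S \<inter> Q))\<^sup>* \<and> s \<in> Q \<and> t \<notin> Q \<and> (s, t) \<in> induced_rel G S"
  using assms
proof (induction rule: converse_rtrancl_induct)
  case base then show ?case by simp
next
  case (step x x')
  show ?case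
  proof (cases "x' \<in> Q")
    case True
    with step obtain s t where st: "(x', s) \<in> (induced_rel G (S \<inter> Q))\<^sup>*" "s \<in> Q" "t \<notin> Q" "(s, t) \<in> induced_rel G S"
      by blast
    have "(x, x') \<in> induced_rel G (S \<inter> Q)" using step(1) True step(4) by (auto simp: induced_rel_def)
    with st show ?thesis by (meson converse_rtrancl_into_rtrancl)
  next
    case False
    then show ?thesis using step by blast
  qed
qed

lemma ipath_induced_rtrancl: "ipath (edges G) ys \<Longrightarrow> set ys \<subseteq> S \<Longrightarrow> ys \<noteq> [] \<Longrightarrow>
    (hd ys, last ys) \<in> (induced_rel G S)\<^sup>*"
  using ipath_rtrancl[OF ipath_restrict] unfolding induced_rel_def by blast

lemma induced_distinct_path:
  assumes "(x, y) \<in> (induced_rel G S)\<^sup>*"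
  obtains ys where "ys \<noteq> []" "hd ys = x" "last ys = y" "distinct ys" "ipath (edges G) ys"
    "x = y \<or> set ys \<subseteq> S"
proof -
  obtain ys where ys: "ys \<noteq> []" "hd ys = x" "last ys = y" "distinct ys" "ipath (induced_rel G S) ys"
    using rtrancl_distinct_ipath[OF assms] by blast
  have "ipath (edges G) ys" using ipath_mono[OF ys(5)] by (auto simp: induced_rel_def)
  moreover have "x = y \<or> set ys \<subseteq> S"
  proof (cases "length ys = 1")
    case True then show ?thesis using ys by (cases ys) auto
  next
    case False
    then have "length ys \<ge> 2" using ys(1) by (cases ys) (auto simp: Suc_le_eq)
    have "ys ! i \<in> S" if "i < length ys" for i
    proof (cases "Suc i < length ys")
      case True then show ?thesis using ipath_nth[OF ys(5) True] by (auto simp: induced_rel_def)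
    next
      case False
      then have "i \<ge> 1" "Suc (i - 1) < length ys" using that \<open>length ys \<ge> 2\<close> by auto
      then show ?thesis using ipath_nth[OF ys(5), of "i - 1"] by (auto simp: induced_rel_def)
    qed
    then show ?thesis by (auto simp: in_set_conv_nth)
  qed
  ultimately show ?thesis using ys that by blast
qed


lemma ipath_verts: "is_graph G \<Longrightarrow> ipath (edges G) ys \<Longrightarrow> 2 \<le> length ys \<Longrightarrow> set ys \<subseteq> verts G"
proof (induction "edges G" ys rule: ipath.induct)
  case (3 x y ys)
  then show ?case by (cases ys) (auto dest: is_graphD(2))
qed auto

lemma distinct_hd_last: "distinct xs \<Longrightarrow> xs \<noteq> [] \<Longrightarrow> hd xs = last xs \<Longrightarrow> xs = [hd xs]"
proof (cases xs)
  case (Cons x ys)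
  assume d: "distinct xs" "hd xs = last xs"
  show ?thesis
  proof (cases "ys = []")
    case False
    then have "last xs \<in> set ys" using Cons by simp
    then show ?thesis using d Cons by auto
  qed (use Cons in simp)
qed simp

lemma no_cycle_tree: "is_tree T \<Longrightarrow> \<not> has_cycle T" and graph_tree: "is_tree T \<Longrightarrow> is_graph T"
  unfolding is_tree_def by auto

lemma tree_cut:
  assumes T: "is_tree T" and e: "(u, v) \<in> edges T" "u \<noteq> v"
  shows "\<exists>S. u \<in> S \<and> v \<notin> S \<and> (\<forall>s t. (s, t) \<in> edges T \<and> s \<in> S \<and> t \<notin> S \<longrightarrow> s = u \<and> t = v)"
proof -
  have G: "is_graph T" using T graph_tree by auto
  define R where "R = edges T - {(u, v), (v, u)}"
  define S where "S = {z. (u, z) \<in> R\<^sup>*}"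
  have vS: "v \<notin> S"
  proof
    assume "v \<in> S"
    then have "(u, v) \<in> R\<^sup>*" by (simp add: S_def)
    then obtain ys where ys: "ys \<noteq> []" "hd ys = u" "last ys = v" "distinct ys" "ipath R ys"
      by (rule rtrancl_distinct_ipath)
    obtain ys' where ys': "ys = u # ys'" using ys by (cases ys) auto
    have "ys' \<noteq> []" using ys ys' e by auto
    then obtain y2 ys'' where ys'': "ys' = y2 # ys''" by (cases ys') auto
    have "ys'' \<noteq> []"
    proof
      assume "ys'' = []"
      then have "(u, v) \<in> R" using ys ys' ys'' by auto
      then show False by (simp add: R_def)
    qed
    then have len: "3 \<le> length ys" using ys' ys'' by (cases ys'') auto
    have ip: "ipath (edges T) ys" using ipath_mono[OF ys(5)] by (auto simp: R_def)
    have "(last ys, hd ys) \<in> edges T" using ys e G by (auto dest: is_graphD(4))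
    moreover have "set ys \<subseteq> verts T" using ipath_verts[OF G ip] len by auto
    ultimately have "has_cycle T" using cycle_from_ipath[OF ys(4) len ip] by auto
    then show False using T no_cycle_tree by auto
  qed
  have "\<forall>s t. (s, t) \<in> edges T \<and> s \<in> S \<and> t \<notin> S \<longrightarrow> s = u \<and> t = v"
  proof (intro allI impI)
    fix s t assume st: "(s, t) \<in> edges T \<and> s \<in> S \<and> t \<notin> S"
    show "s = u \<and> t = v"
    proof (cases "(s, t) \<in> R")
      case True
      then have "t \<in> S" using st by (auto simp: S_def intro: rtrancl_into_rtrancl)
      then show ?thesis using st by auto
    next
      case False
      then show ?thesis using st vS by (auto simp: R_def)
    qed
  qed
  moreover have "u \<in> S" by (simp add: S_def)
  ultimately show ?thesis using vS by blast
qed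

lemma nbrs_sep:
  assumes T: "is_tree T" and w: "w \<in> verts T" and u: "u \<in> nbrs T w" "u' \<in> nbrs T w" "u \<noteq> u'"
  shows "(u, u') \<notin> (induced_rel T (verts T - {w}))\<^sup>*"
proof
  assume "(u, u') \<in> (induced_rel T (verts T - {w}))\<^sup>*"
  then obtain ys where ys: "ys \<noteq> []" "hd ys = u" "last ys = u'" "distinct ys" "ipath (edges T) ys"
     "u = u' \<or> set ys \<subseteq> verts T - {w}"
    by (rule induced_distinct_path)
  then have ys6: "set ys \<subseteq> verts T - {w}" using u(3) by auto
  have G: "is_graph T" using T graph_tree by auto
  have l2: "2 \<le> length ys"
  proof (rule ccontr)
    assume "\<not> 2 \<le> length ys"
    moreover have "length ys > 0" using ys(1) by simp
    ultimately have "length ys = 1" by linarith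
    then obtain y where "ys = [y]" by (metis One_nat_def length_0_conv length_Suc_conv)
    then show False using ys u(3) by auto
  qed
  let ?zs = "ys @ [w]"
  have "distinct ?zs" using ys ys6 by auto
  moreover have "3 \<le> length ?zs" using l2 by simp
  moreover have "ipath (edges T) ?zs" using ys u G by (auto simp: ipath_append nbrs_def dest: is_graphD(4))
  moreover have "(last ?zs, hd ?zs) \<in> edges T" using ys u by (auto simp: nbrs_def)
  moreover have "set ?zs \<subseteq> verts T" using ys6 w by auto
  ultimately have "has_cycle T" by (rule cycle_from_ipath)
  then show False using T no_cycle_tree by auto
qed

lemma unique_cross_edge:
  assumes T: "is_tree T" and F: "connected_in T F" "connected_in T F'" "F \<inter> F' = {}"
    and e: "(p, q) \<in> edges T" "(p', q') \<in> edges T" "p \<in> F" "p' \<in> F" "q \<in> F'" "q' \<in> F'"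
  shows "p = p' \<and> q = q'"
proof (rule ccontr)
  assume ne: "\<not> (p = p' \<and> q = q')"
  have G: "is_graph T" using T graph_tree by auto
  have "(p', p) \<in> (induced_rel T F)\<^sup>*" using F(1) e unfolding connected_in_def by auto
  then obtain xs where xs: "xs \<noteq> []" "hd xs = p'" "last xs = p" "distinct xs" "ipath (edges T) xs"
     "p' = p \<or> set xs \<subseteq> F" by (rule induced_distinct_path)
  have xsF: "set xs \<subseteq> F"
  proof (cases "p' = p")
    case True
    then have "xs = [p]" using xs distinct_hd_last[of xs] by simp
    then show ?thesis using e by simp
  qed (use xs in blast)
  have "(q, q') \<in> (induced_rel T F')\<^sup>*" using F(2) e unfolding connected_in_def by auto
  then obtain ys where ys: "ys \<noteq> []" "hd ys = q" "last ys = q'" "distinct ys" "ipath (edges T) ys"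
     "q = q' \<or> set ys \<subseteq> F'" by (rule induced_distinct_path)
  have ysF: "set ys \<subseteq> F'"
  proof (cases "q = q'")
    case True
    then have "ys = [q]" using ys distinct_hd_last[of ys] by simp
    then show ?thesis using e by simp
  qed (use ys in blast)
  let ?zs = "xs @ ys"
  have "distinct ?zs" using xs ys xsF ysF F(3) by auto
  moreover have "3 \<le> length ?zs"
  proof -
    have "length xs \<ge> 2 \<or> length ys \<ge> 2"
    proof (rule ccontr)
      assume "\<not> ?thesis"
      moreover have "length xs > 0" "length ys > 0" using xs(1) ys(1) by simp_all
      ultimately have "length xs = 1" "length ys = 1" by linarith+
      then obtain x y where "xs = [x]" "ys = [y]" by (metis One_nat_def length_0_conv length_Suc_conv)
      then show False using ne xs ys by auto
    qed
    moreover have "length xs > 0" "length ys > 0" using xs(1) ys(1) by simp_all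
    ultimately have "3 \<le> length xs + length ys" by linarith
    then show ?thesis by simp
  qed
  moreover have "ipath (edges T) ?zs" using xs(1,3,5) ys(1,2,5) e(1) by (simp add: ipath_append)
  moreover have "(last ?zs, hd ?zs) \<in> edges T" using xs(1,2) ys(1,3) e(2) G by (simp add: is_graphD(4))
  moreover have "set ?zs \<subseteq> verts T" using xsF ysF F unfolding connected_in_def by auto
  ultimately have "has_cycle T" by (rule cycle_from_ipath)
  then show False using T no_cycle_tree by auto
qed

lemma cut_no_cycle:
  assumes G: "is_graph G"
    and cut: "\<And>u v. (u, v) \<in> edges G \<Longrightarrow> u \<noteq> v \<Longrightarrow>
       \<exists>S. u \<in> S \<and> v \<notin> S \<and> (\<forall>s t. (s, t) \<in> edges G \<and> s \<in> S \<and> t \<notin> S \<longrightarrow> s = u \<and> t = v)"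
  shows "\<not> has_cycle G"
proof
  assume "has_cycle G"
  then obtain vs where vs: "length vs \<ge> 3" "distinct vs" "set vs \<subseteq> verts G"
    "\<forall>i < length vs. (vs ! i, vs ! ((i + 1) mod length vs)) \<in> edges G"
    unfolding has_cycle_def by blast
  let ?L = "length vs"
  have "vs \<noteq> []" using vs(1) by auto
  then have e01: "(vs ! 0, vs ! 1) \<in> edges G" using vs(4)[rule_format, of 0] vs(1) by simp
  have ne: "vs ! 0 \<noteq> vs ! 1"
  proof -
    have "0 < length vs" "1 < length vs" using vs(1) by auto
    then show ?thesis using vs(2) unfolding distinct_conv_nth by (metis zero_neq_one)
  qed
  obtain S where S: "vs ! 0 \<in> S" "vs ! 1 \<notin> S"
    "\<forall>s t. (s, t) \<in> edges G \<and> s \<in> S \<and> t \<notin> S \<longrightarrow> s = vs ! 0 \<and> t = vs ! 1"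
    using cut[OF e01 ne] by blast
  define J where "J = {j. 1 \<le> j \<and> j < ?L \<and> vs ! j \<notin> S}"
  have "1 \<in> J" using S vs(1) by (simp add: J_def)
  have finJ: "finite J" by (auto simp: J_def)
  define j where "j = Max J"
  have jJ: "j \<in> J" using Max_in[OF finJ] \<open>1 \<in> J\<close> j_def by auto
  have jmax: "\<And>k. k \<in> J \<Longrightarrow> k \<le> j" using Max_ge[OF finJ] j_def by auto
  have nxt: "vs ! ((j + 1) mod ?L) \<in> S"
  proof (cases "j + 1 < ?L")
    case True
    then have "j + 1 \<notin> J" using jmax by force
    then show ?thesis using True jJ by (simp add: J_def)
  next
    case False
    then have "j + 1 = ?L" using jJ by (simp add: J_def)
    then show ?thesis using S by simp
  qed
  have "(vs ! j, vs ! ((j + 1) mod ?L)) \<in> edges G" using vs(4) jJ by (simp add: J_def)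
  then have "(vs ! ((j + 1) mod ?L), vs ! j) \<in> edges G" using G by (auto dest: is_graphD(4))
  then have eq: "vs ! ((j + 1) mod ?L) = vs ! 0" "vs ! j = vs ! 1"
    using S(3) nxt jJ by (auto simp: J_def)
  have "j = 1" using eq(2) vs(1,2) jJ by (simp add: J_def nth_eq_iff_index_eq)
  moreover have "(j + 1) mod ?L = 0"
  proof -
    have "0 < ?L" using vs(1) by auto
    then have "(j + 1) mod ?L < ?L" by (rule mod_less_divisor)
    with \<open>0 < ?L\<close> show ?thesis using eq(1) vs(2) unfolding distinct_conv_nth by metis
  qed
  ultimately show False using vs(1) by simp
qed

lemma cut_pullback:
  assumes hom: "\<And>s t. (s, t) \<in> edges D \<Longrightarrow> (h s, h t) \<in> edges X"
    and uniq: "\<And>s t. (s, t) \<in> edges D \<Longrightarrow> h s = h u \<Longrightarrow> h t = h v \<Longrightarrow> s = u \<and> t = v"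
    and cutX: "\<exists>S. h u \<in> S \<and> h v \<notin> S \<and> (\<forall>s t. (s, t) \<in> edges X \<and> s \<in> S \<and> t \<notin> S \<longrightarrow> s = h u \<and> t = h v)"
  shows "\<exists>S. u \<in> S \<and> v \<notin> S \<and> (\<forall>s t. (s, t) \<in> edges D \<and> s \<in> S \<and> t \<notin> S \<longrightarrow> s = u \<and> t = v)"
proof -
  obtain S where S: "h u \<in> S" "h v \<notin> S" "\<forall>s t. (s, t) \<in> edges X \<and> s \<in> S \<and> t \<notin> S \<longrightarrow> s = h u \<and> t = h v"
    using cutX by blast
  show ?thesis
    apply (rule exI[of _ "{z. h z \<in> S}"])
    using S hom uniq by blast
qed


lemma cmp_self: "x \<in> S \<Longrightarrow> x \<in> cmp G S x"
  by (simp add: cmp_def)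

lemma cmp_sub: "cmp G S x \<subseteq> S"
  by (auto simp: cmp_def)

lemma cmp_eq:
  assumes "is_graph G" "y \<in> cmp G S x" shows "cmp G S y = cmp G S x"
proof -
  have xy: "(x, y) \<in> (induced_rel G S)\<^sup>*" using assms by (simp add: cmp_def)
  then have yx: "(y, x) \<in> (induced_rel G S)\<^sup>*" using induced_sym assms(1) by blast
  show ?thesis unfolding cmp_def using xy yx by (auto intro: rtrancl_trans)
qed

lemma cmp_closed:
  assumes "y \<in> cmp G S x" "(y, z) \<in> edges G" "z \<in> S" shows "z \<in> cmp G S x"
  using assms unfolding cmp_def induced_rel_def by (auto intro: rtrancl_into_rtrancl)

lemma cmp_path_inside:
  assumes "(x, y) \<in> (induced_rel G S)\<^sup>*" "x \<in> S"
  shows "(x, y) \<in> (induced_rel G (cmp G S x))\<^sup>*"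
  using assms(1)
proof (induction rule: rtrancl_induct)
  case (step y z)
  have "y \<in> cmp G S x"
    using step(1) assms(2) induced_in[OF step(1)] unfolding cmp_def by auto
  moreover have "z \<in> cmp G S x" using step(1,2) unfolding cmp_def induced_rel_def
    by (auto intro: rtrancl_into_rtrancl)
  ultimately have "(y, z) \<in> induced_rel G (cmp G S x)" using step(2) by (auto simp: induced_rel_def)
  with step(3) show ?case by (rule rtrancl_into_rtrancl)
qed simp

lemma cmp_connected:
  assumes G: "is_graph G" and S: "S \<subseteq> verts G" "x \<in> S"
  shows "connected_in G (cmp G S x)"
  unfolding connected_in_def
proof (intro conjI ballI)
  show "cmp G S x \<noteq> {}" using cmp_self[OF S(2), where G=G] by auto
  show "cmp G S x \<subseteq> verts G" using cmp_sub[of G S x] S by auto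
next
  fix y z assume yz: "y \<in> cmp G S x" "z \<in> cmp G S x"
  have "(x, y) \<in> (induced_rel G (cmp G S x))\<^sup>*" "(x, z) \<in> (induced_rel G (cmp G S x))\<^sup>*"
    using cmp_path_inside[OF _ S(2)] yz by (auto simp: cmp_def)
  then show "(y, z) \<in> (induced_rel G (cmp G S x))\<^sup>*"
    using induced_sym[OF G] by (blast intro: rtrancl_trans)
qed

lemma components_finite: "finite S \<Longrightarrow> finite (components G S)"
  by (simp add: components_comp)



lemma tree_nbrs_comp_bij:
  assumes T: "is_tree T" and v: "v \<in> verts T"
  shows "bij_betw (cmp T (verts T - {v})) (nbrs T v) (components T (verts T - {v}))"
proof -
  have G: "is_graph T" using T graph_tree by auto
  let ?S = "verts T - {v}"
  have inj: "inj_on (cmp T ?S) (nbrs T v)"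
  proof (rule inj_onI)
    fix u u' assume u: "u \<in> nbrs T v" "u' \<in> nbrs T v" "cmp T ?S u = cmp T ?S u'"
    show "u = u'"
    proof (rule ccontr)
      assume ne: "u \<noteq> u'"
      have "u' \<in> ?S" using u by (auto simp: nbrs_def)
      then have "u' \<in> cmp T ?S u" using u(3) cmp_self by metis
      then have "(u, u') \<in> (induced_rel T ?S)\<^sup>*" by (simp add: cmp_def)
      then show False using nbrs_sep[OF T v u(1,2) ne] by simp
    qed
  qed
  have "cmp T ?S ` nbrs T v = components T ?S"
  proof
    show "cmp T ?S ` nbrs T v \<subseteq> components T ?S"
      unfolding components_comp by (auto simp: nbrs_def)
  next
    show "components T ?S \<subseteq> cmp T ?S ` nbrs T v"
    proof
      fix K assume "K \<in> components T ?S"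
      then obtain z where z: "z \<in> ?S" "K = cmp T ?S z" unfolding components_comp by auto
      have "(z, v) \<in> (induced_rel T (verts T))\<^sup>*" using T z v unfolding is_tree_def connected_in_def by auto
      from exit_lemma[OF this, of ?S] z
      obtain s t where st: "(z, s) \<in> (induced_rel T (verts T \<inter> ?S))\<^sup>*" "s \<in> ?S" "t \<notin> ?S"
        "(s, t) \<in> induced_rel T (verts T)" by auto
      have "t = v" using st by (auto simp: induced_rel_def)
      then have sn: "s \<in> nbrs T v" using st G by (auto simp: nbrs_def induced_rel_def dest: is_graphD(4))
      have "verts T \<inter> ?S = ?S" by auto
      then have "s \<in> cmp T ?S z" using st by (simp add: cmp_def)
      then have "cmp T ?S s = K" using cmp_eq[OF G] z by metis
      then show "K \<in> cmp T ?S ` nbrs T v" using sn by blast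
    qed
  qed
  with inj show ?thesis by (simp add: bij_betw_def)
qed

lemma tree_card_components:
  assumes T: "is_tree T" and v: "v \<in> verts T"
  shows "card (components T (verts T - {v})) = ord T v"
  using bij_betw_same_card[OF tree_nbrs_comp_bij[OF T v]] by (simp add: ord_nbrs)

lemma tree_comp_nbr_unique:
  assumes T: "is_tree T" and v: "v \<in> verts T" and u: "u \<in> nbrs T v" "u' \<in> nbrs T v"
    and "u' \<in> cmp T (verts T - {v}) u"
  shows "u' = u"
proof -
  have G: "is_graph T" using T graph_tree by auto
  have "cmp T (verts T - {v}) u' = cmp T (verts T - {v}) u" using cmp_eq[OF G assms(5)] .
  then show ?thesis using tree_nbrs_comp_bij[OF T v] u unfolding bij_betw_def inj_on_def by metis
qed



lemma preimage_connected:
  assumes hV: "\<And>d. d \<in> verts D \<Longrightarrow> h d \<in> verts X"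
    and fib: "\<And>x. x \<in> verts X \<Longrightarrow> connected_in D {d \<in> verts D. h d = x}"
    and lift: "\<And>x1 x2. (x1, x2) \<in> edges X \<Longrightarrow> x1 \<in> verts X \<Longrightarrow> x2 \<in> verts X \<Longrightarrow>
        \<exists>d1\<in>verts D. \<exists>d2\<in>verts D. h d1 = x1 \<and> h d2 = x2 \<and> (d1, d2) \<in> edges D"
    and conn: "connected_in X S"
  shows "connected_in D {d \<in> verts D. h d \<in> S}"
  unfolding connected_in_def
proof (intro conjI ballI)
  let ?Q = "{d \<in> verts D. h d \<in> S}"
  obtain x where x: "x \<in> S" using conn unfolding connected_in_def by auto
  then have "x \<in> verts X" using conn unfolding connected_in_def by auto
  then have "{d \<in> verts D. h d = x} \<noteq> {}" using fib unfolding connected_in_def by blast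
  then obtain d where "d \<in> verts D" "h d = x" by blast
  then show "?Q \<noteq> {}" using x by auto
  show "?Q \<subseteq> verts D" by auto
next
  let ?Q = "{d \<in> verts D. h d \<in> S}"
  fix d d' assume dd: "d \<in> ?Q" "d' \<in> ?Q"
  have SX: "S \<subseteq> verts X" using conn unfolding connected_in_def by auto
  have fibQ: "(e, e') \<in> (induced_rel D ?Q)\<^sup>*" if "e \<in> verts D" "e' \<in> verts D" "h e = h e'" "h e \<in> S" for e e'
  proof -
    have "(e, e') \<in> (induced_rel D {z \<in> verts D. h z = h e})\<^sup>*"
      using fib[of "h e"] that SX unfolding connected_in_def by auto
    then show ?thesis by (rule induced_mono[rotated]) (use that in auto)
  qed
  have "(h d, h d') \<in> (induced_rel X S)\<^sup>*" using conn dd unfolding connected_in_def by auto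
  then have "\<forall>e'. e' \<in> verts D \<longrightarrow> h e' = h d' \<longrightarrow> (d, e') \<in> (induced_rel D ?Q)\<^sup>*"
  proof (induction rule: rtrancl_induct)
    case base
    then show ?case using fibQ dd by auto
  next
    case (step y z)
    show ?case
    proof (intro allI impI)
      fix e' assume e': "e' \<in> verts D" "h e' = z"
      have yz: "(y, z) \<in> edges X" "y \<in> S" "z \<in> S" using step(2) by (auto simp: induced_rel_def)
      then obtain d1 d2 where d12: "d1 \<in> verts D" "d2 \<in> verts D" "h d1 = y" "h d2 = z" "(d1, d2) \<in> edges D"
        using lift SX by blast
      have "(d, d1) \<in> (induced_rel D ?Q)\<^sup>*" using step(3) d12 by auto
      moreover have "(d1, d2) \<in> induced_rel D ?Q" using d12 yz by (auto simp: induced_rel_def)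
      moreover have "(d2, e') \<in> (induced_rel D ?Q)\<^sup>*" using fibQ d12 e' yz by auto
      ultimately show "(d, e') \<in> (induced_rel D ?Q)\<^sup>*" by (meson rtrancl_into_rtrancl rtrancl_trans)
    qed
  qed
  then show "(d, d') \<in> (induced_rel D ?Q)\<^sup>*" using dd by auto
qed

lemma monotone_epi_preimage_connected:
  assumes "monotone_epi D X h" "connected_in X S"
  shows "connected_in D {d \<in> verts D. h d \<in> S}"
proof (rule preimage_connected[OF _ _ _ assms(2)])
  show "\<And>d. d \<in> verts D \<Longrightarrow> h d \<in> verts X" using assms(1) unfolding monotone_epi_def epi_def by auto
  show "\<And>x. x \<in> verts X \<Longrightarrow> connected_in D {d \<in> verts D. h d = x}"
    using assms(1) unfolding monotone_epi_def by auto
  show "\<And>x1 x2. (x1, x2) \<in> edges X \<Longrightarrow> x1 \<in> verts X \<Longrightarrow> x2 \<in> verts X \<Longrightarrow>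
        \<exists>d1\<in>verts D. \<exists>d2\<in>verts D. h d1 = x1 \<and> h d2 = x2 \<and> (d1, d2) \<in> edges D"
    using assms(1) unfolding monotone_epi_def epi_def by blast
qed



lemma bij_from_inj_card:
  assumes "inj_on p A" "p ` A \<subseteq> B" "card A = card B" "finite B"
  shows "bij_betw p A B"
proof -
  have "card (p ` A) = card B" using assms(1,3) card_image by metis
  then have "p ` A = B" using card_subset_eq[OF assms(4) assms(2)] by simp
  then show ?thesis using assms(1) by (simp add: bij_betw_def)
qed

lemma coh_lemma:
  assumes TD: "is_tree D" and TX: "is_tree X" and h: "monotone_epi D X h"
    and x: "x \<in> verts X" "3 \<le> ord X x" and d: "d \<in> verts D" "h d = x" "ord D d = ord X x"
    and sep: "\<And>u u' w w'. u \<in> nbrs X x \<Longrightarrow> u' \<in> nbrs X x \<Longrightarrow> u \<noteq> u' \<Longrightarrow> w \<in> verts D \<Longrightarrow>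
        w' \<in> verts D \<Longrightarrow> h w = u \<Longrightarrow> h w' = u' \<Longrightarrow> (w, w') \<notin> (induced_rel D (verts D - {d}))\<^sup>*"
  shows "point_of_coherence D X h x"
proof -
  have GD: "is_graph D" and GX: "is_graph X" using TD TX graph_tree by auto
  let ?SX = "verts X - {x}" and ?SD = "verts D - {d}"
  have surj: "h ` verts D = verts X" using h unfolding monotone_epi_def epi_def by auto
  define p where "p K = cmp D ?SD (SOME w. w \<in> verts D \<and> h w \<in> K)" for K
  have KX: "K \<subseteq> ?SX \<and> K \<noteq> {} \<and> connected_in X K" if K: "K \<in> components X ?SX" for K
  proof -
    obtain z where z: "z \<in> ?SX" "K = cmp X ?SX z" using K[unfolded components_comp] by blast
    show ?thesis using cmp_connected[OF GX _ z(1)] cmp_sub[of X ?SX z] cmp_self[OF z(1), where G=X] z by auto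
  qed
  have pre: "{z \<in> verts D. h z \<in> K} \<subseteq> p K \<and> p K \<in> components D ?SD" if K: "K \<in> components X ?SX" for K
  proof -
    obtain k where k: "k \<in> K" using KX[OF K] by blast
    then have "k \<in> h ` verts D" using KX[OF K] surj by auto
    then have ex: "\<exists>w. w \<in> verts D \<and> h w \<in> K" using k by blast
    define w where "w = (SOME w. w \<in> verts D \<and> h w \<in> K)"
    have w: "w \<in> verts D" "h w \<in> K" using someI_ex[OF ex] by (auto simp: w_def)
    have wd: "w \<noteq> d" using w KX[OF K] d by auto
    have conn: "connected_in D {z \<in> verts D. h z \<in> K}"
      using monotone_epi_preimage_connected[OF h] KX[OF K] by auto
    have sub: "{z \<in> verts D. h z \<in> K} \<subseteq> ?SD" using KX[OF K] d by auto
    have "{z \<in> verts D. h z \<in> K} \<subseteq> cmp D ?SD w"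
    proof
      fix z assume z: "z \<in> {z \<in> verts D. h z \<in> K}"
      then have "(w, z) \<in> (induced_rel D {z \<in> verts D. h z \<in> K})\<^sup>*"
        using conn w unfolding connected_in_def by auto
      then have "(w, z) \<in> (induced_rel D ?SD)\<^sup>*" using induced_mono[OF sub] by blast
      then show "z \<in> cmp D ?SD w" using z sub by (auto simp: cmp_def)
    qed
    moreover have "cmp D ?SD w \<in> components D ?SD" using w wd d unfolding components_comp by auto
    ultimately show ?thesis by (simp add: p_def w_def)
  qed
  have inj: "inj_on p (components X ?SX)"
  proof (rule inj_onI)
    fix K1 K2 assume K: "K1 \<in> components X ?SX" "K2 \<in> components X ?SX" "p K1 = p K2"
    show "K1 = K2"
    proof (rule ccontr)
      assume ne: "K1 \<noteq> K2"
      obtain u1 where u1: "u1 \<in> nbrs X x" "K1 = cmp X ?SX u1"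
        using tree_nbrs_comp_bij[OF TX x(1)] K(1) unfolding bij_betw_def by auto
      obtain u2 where u2: "u2 \<in> nbrs X x" "K2 = cmp X ?SX u2"
        using tree_nbrs_comp_bij[OF TX x(1)] K(2) unfolding bij_betw_def by auto
      have une: "u1 \<noteq> u2" using ne u1 u2 by auto
      have "u1 \<in> verts X" "u2 \<in> verts X" using u1 u2 by (auto simp: nbrs_def)
      then obtain w1 w2 where w: "w1 \<in> verts D" "h w1 = u1" "w2 \<in> verts D" "h w2 = u2"
        using surj by (metis imageE)
      have "u1 \<in> K1" "u2 \<in> K2" using u1 u2 cmp_self by (auto simp: nbrs_def)
      then have "w1 \<in> p K1" "w2 \<in> p K2" using pre K w by auto
      then have "w1 \<in> p K1" "w2 \<in> p K1" using K(3) by auto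
      moreover obtain w0 where "p K1 = cmp D ?SD w0" using pre[OF K(1)] unfolding components_comp by auto
      ultimately have "(w0, w1) \<in> (induced_rel D ?SD)\<^sup>*" "(w0, w2) \<in> (induced_rel D ?SD)\<^sup>*"
        by (auto simp: cmp_def)
      then have "(w1, w2) \<in> (induced_rel D ?SD)\<^sup>*" using induced_sym[OF GD] by (blast intro: rtrancl_trans)
      then show False using sep[OF u1(1) u2(1) une w(1,3)] w by auto
    qed
  qed
  have "bij_betw p (components X ?SX) (components D ?SD)"
  proof (rule bij_from_inj_card[OF inj])
    show "p ` components X ?SX \<subseteq> components D ?SD" using pre by auto
    show "card (components X ?SX) = card (components D ?SD)"
      using tree_card_components[OF TX x(1)] tree_card_components[OF TD d(1)] d(3) by simp
    show "finite (components D ?SD)" using GD is_graphD(1) components_finite by auto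
  qed
  then show ?thesis unfolding point_of_coherence_def using x d pre by auto
qed



lemma tree_has_nbr:
  assumes T: "is_tree T" and v: "v \<in> verts T" and z: "z \<in> verts T" "z \<noteq> v"
  shows "\<exists>t. t \<in> nbrs T v"
proof -
  have "(v, z) \<in> (induced_rel T (verts T))\<^sup>*" using T v z unfolding is_tree_def connected_in_def by auto
  from exit_lemma[OF this, of "{v}"] z
  obtain s t where st: "(v, s) \<in> (induced_rel T (verts T \<inter> {v}))\<^sup>*" "s \<in> {v}" "t \<notin> {v}"
    "(s, t) \<in> induced_rel T (verts T)" by auto
  then show ?thesis by (auto simp: nbrs_def induced_rel_def)
qed

lemma leaf_lemma:
  assumes T: "is_tree T" and v: "v \<in> verts T" and c2: "2 \<le> card (verts T)"
  shows "\<exists>l \<in> verts T. l \<noteq> v \<and> ord T l = 1 \<and> connected_in T (verts T - {l})"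
proof -
  have G: "is_graph T" using T graph_tree by auto
  have finV: "finite (verts T)" using G is_graphD(1) by auto
  define PS where "PS = {ys. ys \<noteq> [] \<and> hd ys = v \<and> distinct ys \<and> ipath (edges T) ys \<and> set ys \<subseteq> verts T}"
  have lenb: "length ys \<le> card (verts T)" if "ys \<in> PS" for ys
  proof -
    have "distinct ys" "set ys \<subseteq> verts T" using that by (auto simp: PS_def)
    then show ?thesis using distinct_card card_mono[OF finV] by metis
  qed
  obtain z where z: "z \<in> verts T" "z \<noteq> v"
  proof -
    have "verts T \<noteq> {v}" using c2 by auto
    then show ?thesis using that v by blast
  qed
  obtain t where t: "t \<in> nbrs T v" using tree_has_nbr[OF T v z] by auto
  have "[v, t] \<in> PS" using t v by (auto simp: PS_def nbrs_def)
  then obtain ys where ys: "ys \<in> PS" "\<forall>zs. zs \<in> PS \<longrightarrow> length zs \<le> length ys"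
    using ex_has_greatest_nat[where P="\<lambda>ys. ys \<in> PS" and k="[v, t]" and f=length and b="Suc (card (verts T))"] lenb
    by (metis le_imp_less_Suc)
  have maxl: "length zs \<le> length ys" if "zs \<in> PS" for zs using ys that by auto
  have "2 \<le> length ys" using maxl[OF \<open>[v, t] \<in> PS\<close>] by simp
  define L where "L = length ys"
  define l where "l = last ys"
  define pr where "pr = ys ! (L - 2)"
  have ys1: "ys \<noteq> []" "hd ys = v" "distinct ys" "ipath (edges T) ys" "set ys \<subseteq> verts T"
    using ys(1) by (auto simp: PS_def)
  have L2: "2 \<le> L" using \<open>2 \<le> length ys\<close> by (simp add: L_def)
  have lnth: "l = ys ! (L - 1)" using ys1(1) by (simp add: l_def L_def last_conv_nth)
  have lv: "l \<noteq> v"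
  proof -
    have "ys ! 0 = v" using ys1 by (simp add: hd_conv_nth)
    moreover have "ys ! 0 \<noteq> ys ! (L - 1)"
    proof -
      have "L - 1 < length ys" "0 < length ys" "0 \<noteq> L - 1" using L2 by (auto simp: L_def)
      then show ?thesis using ys1(3) unfolding distinct_conv_nth by blast
    qed
    ultimately show ?thesis using lnth by simp
  qed
  have lV: "l \<in> verts T" using ys1(1,5) last_in_set[of ys] unfolding l_def by blast
  have epl: "(pr, l) \<in> edges T"
  proof -
    have "Suc (L - 2) = L - 1" "Suc (L - 2) < length ys" using L2 by (auto simp: L_def)
    then show ?thesis using ipath_nth[OF ys1(4), of "L - 2"] lnth by (simp add: pr_def)
  qed
  have prl: "pr \<noteq> l" using ys1(3) L2 unfolding distinct_conv_nth pr_def lnth L_def by auto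
  have prn: "pr \<in> nbrs T l" using epl prl G by (auto simp: nbrs_def dest: is_graphD)
  have nb: "nbrs T l = {pr}"
  proof
    show "{pr} \<subseteq> nbrs T l" using prn by auto
  next
    show "nbrs T l \<subseteq> {pr}"
    proof
      fix w assume w: "w \<in> nbrs T l"
      have wys: "w \<in> set ys"
      proof (rule ccontr)
        assume "w \<notin> set ys"
        then have "ys @ [w] \<in> PS" using ys1 w by (auto simp: PS_def nbrs_def ipath_append l_def)
        then show False using maxl by fastforce
      qed
      then obtain k where k: "k < L" "ys ! k = w" by (auto simp: in_set_conv_nth L_def)
      have "k \<noteq> L - 1" using w lnth k by (auto simp: nbrs_def)
      moreover have "\<not> k < L - 2"
      proof
        assume kl: "k < L - 2"
        let ?zs = "drop k ys"
        have "distinct ?zs" using ys1 by simp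
        moreover have "3 \<le> length ?zs" using kl by (simp add: L_def)
        moreover have "ipath (edges T) ?zs" using ipath_drop[OF ys1(4)] .
        moreover have "(last ?zs, hd ?zs) \<in> edges T"
        proof -
          have "last ?zs = l" using kl by (simp add: l_def L_def)
          moreover have "hd ?zs = w" using k kl by (simp add: hd_drop_conv_nth L_def)
          ultimately show ?thesis using w by (simp add: nbrs_def)
        qed
        moreover have "set ?zs \<subseteq> verts T" using ys1 set_drop_subset by fastforce
        ultimately have "has_cycle T" by (rule cycle_from_ipath)
        then show False using T no_cycle_tree by auto
      qed
      ultimately have "k = L - 2" using k by auto
      then show "w \<in> {pr}" using k by (simp add: pr_def)
    qed
  qed
  have ord1: "ord T l = 1" using nb by (simp add: ord_nbrs)
  have conn: "connected_in T (verts T - {l})"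
    unfolding connected_in_def
  proof (intro conjI ballI)
    show "verts T - {l} \<noteq> {}" using v lv by auto
    show "verts T - {l} \<subseteq> verts T" by auto
  next
    fix a b assume ab: "a \<in> verts T - {l}" "b \<in> verts T - {l}"
    show "(a, b) \<in> (induced_rel T (verts T - {l}))\<^sup>*"
    proof (cases "a = b")
      case False
      have "(a, b) \<in> (induced_rel T (verts T))\<^sup>*" using T ab unfolding is_tree_def connected_in_def by auto
      then obtain zs where zs: "zs \<noteq> []" "hd zs = a" "last zs = b" "distinct zs" "ipath (edges T) zs"
        "a = b \<or> set zs \<subseteq> verts T" by (rule induced_distinct_path)
      have "l \<notin> set zs"
      proof
        assume "l \<in> set zs"
        then obtain i where i: "i < length zs" "zs ! i = l" by (auto simp: in_set_conv_nth)
        have "zs ! 0 = a" using zs(1,2) by (simp add: hd_conv_nth)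
        then have "i \<noteq> 0" using i ab by (metis DiffE singletonI)
        moreover have "zs ! (length zs - 1) = b" using zs(1,3) by (simp add: last_conv_nth)
        then have "i \<noteq> length zs - 1" using i ab by (metis DiffE singletonI)
        ultimately have i1: "Suc (i - 1) = i" "Suc i < length zs" using i by auto
        have e1: "(zs ! (i - 1), l) \<in> edges T" using ipath_nth[OF zs(5), of "i - 1"] i1 i by simp
        have e2: "(l, zs ! Suc i) \<in> edges T" using ipath_nth[OF zs(5), of i] i1 i by simp
        have d1: "zs ! (i - 1) \<noteq> l" "zs ! Suc i \<noteq> l" "zs ! (i - 1) \<noteq> zs ! Suc i"
          using zs(4) i i1 unfolding distinct_conv_nth by (metis Suc_n_not_le_n lessI less_trans nat_less_le)+
        have "zs ! (i - 1) \<in> nbrs T l" "zs ! Suc i \<in> nbrs T l"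
          using e1 e2 d1 G by (auto simp: nbrs_def dest: is_graphD)
        then show False using nb d1 by auto
      qed
      then have "set zs \<subseteq> verts T - {l}" using zs False by auto
      then show ?thesis using ipath_induced_rtrancl[OF zs(5) _ zs(1)] zs by auto
    qed simp
  qed
  show ?thesis using lV lv ord1 conn by blast
qed


lemma epiD:
  assumes "epi B A f"
  shows "f ` verts B = verts A" "\<And>b. b \<in> verts B \<Longrightarrow> f b \<in> verts A"
    "\<And>a1 a2. a1 \<in> verts A \<Longrightarrow> a2 \<in> verts A \<Longrightarrow> (a1, a2) \<in> edges A \<Longrightarrow>
       \<exists>b1\<in>verts B. \<exists>b2\<in>verts B. f b1 = a1 \<and> f b2 = a2 \<and> (b1, b2) \<in> edges B"
    "\<And>b1 b2. b1 \<in> verts B \<Longrightarrow> b2 \<in> verts B \<Longrightarrow> (b1, b2) \<in> edges B \<Longrightarrow> (f b1, f b2) \<in> edges A"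
  using assms unfolding epi_def by blast+

lemma epi_hom:
  assumes "epi B A f" "is_graph B" "(b1, b2) \<in> edges B"
  shows "(f b1, f b2) \<in> edges A"
  using epiD(4)[OF assms(1)] is_graphD(2)[OF assms(2) assms(3)] assms(3) by blast

lemma GP_tree: "T \<in> GP P \<Longrightarrow> is_tree T"
  unfolding GP_def by auto

lemma id_mor:
  assumes "A \<in> GP P" shows "GP_mor P A A id"
proof -
  have T: "is_tree A" using assms GP_tree by auto
  have epi: "epi A A id" unfolding epi_def by auto
  have mono: "monotone_epi A A id" unfolding monotone_epi_def
  proof (intro conjI ballI epi)
    fix a assume a: "a \<in> verts A"
    have "{b \<in> verts A. id b = a} = {a}" using a by auto
    then show "connected_in A {b \<in> verts A. id b = a}" using a unfolding connected_in_def by auto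
  qed
  have coh: "coherent A A id" unfolding coherent_def point_of_coherence_def
  proof (intro ballI impI conjI)
    fix a assume a: "a \<in> verts A" "3 \<le> ord A a"
    show "\<exists>b\<in>verts A. id b = a \<and> ord A b = ord A a \<and>
          (\<exists>p. bij_betw p (components A (verts A - {a})) (components A (verts A - {b})) \<and>
               (\<forall>Ai\<in>components A (verts A - {a}). {x \<in> verts A. id x \<in> Ai} \<subseteq> p Ai))"
      using a by (intro bexI[of _ a] conjI exI[of _ id]) auto
  qed (auto)
  show ?thesis unfolding GP_mor_def using assms mono coh by auto
qed

lemma comp_mor:
  assumes f: "GP_mor P B A f" and g: "GP_mor P D B g"
  shows "GP_mor P D A (f \<circ> g)"
proof -
  have fm: "monotone_epi B A f" "coherent B A f" and gm: "monotone_epi D B g" "coherent D B g"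
    using f g unfolding GP_mor_def by auto
  have fe: "epi B A f" and ge: "epi D B g" using fm gm unfolding monotone_epi_def by auto
  have GB: "is_graph B" "is_graph D" using f g unfolding GP_mor_def GP_def is_tree_def by auto
  have epi: "epi D A (f \<circ> g)"
    unfolding epi_def
  proof (intro conjI ballI)
    show "(f \<circ> g) ` verts D = verts A" using epiD(1)[OF fe] epiD(1)[OF ge] by (metis image_comp)
  next
    fix a1 a2 assume a: "a1 \<in> verts A" "a2 \<in> verts A"
    show "((a1, a2) \<in> edges A) = (\<exists>b1\<in>verts D. \<exists>b2\<in>verts D. (f \<circ> g) b1 = a1 \<and> (f \<circ> g) b2 = a2 \<and> (b1, b2) \<in> edges D)"
    proof
      assume "(a1, a2) \<in> edges A"
      then obtain b1 b2 where b: "b1 \<in> verts B" "b2 \<in> verts B" "f b1 = a1" "f b2 = a2" "(b1, b2) \<in> edges B"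
        using epiD(3)[OF fe a] by blast
      then obtain d1 d2 where "d1 \<in> verts D" "d2 \<in> verts D" "g d1 = b1" "g d2 = b2" "(d1, d2) \<in> edges D"
        using epiD(3)[OF ge b(1,2)] by blast
      then show "\<exists>b1\<in>verts D. \<exists>b2\<in>verts D. (f \<circ> g) b1 = a1 \<and> (f \<circ> g) b2 = a2 \<and> (b1, b2) \<in> edges D"
        using b by auto
    next
      assume "\<exists>b1\<in>verts D. \<exists>b2\<in>verts D. (f \<circ> g) b1 = a1 \<and> (f \<circ> g) b2 = a2 \<and> (b1, b2) \<in> edges D"
      then obtain d1 d2 where d: "d1 \<in> verts D" "d2 \<in> verts D" "f (g d1) = a1" "f (g d2) = a2" "(d1, d2) \<in> edges D"
        by auto
      have "(g d1, g d2) \<in> edges B" using epiD(4)[OF ge d(1,2,5)] .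
      then have "(f (g d1), f (g d2)) \<in> edges A" using epiD(4)[OF fe] epiD(2)[OF ge] d by blast
      then show "(a1, a2) \<in> edges A" using d by simp
    qed
  qed
  have mono: "monotone_epi D A (f \<circ> g)" unfolding monotone_epi_def
  proof (intro conjI ballI epi)
    fix a assume a: "a \<in> verts A"
    have c: "connected_in B {b \<in> verts B. f b = a}" using fm a unfolding monotone_epi_def by auto
    have "{d \<in> verts D. (f \<circ> g) d = a} = {d \<in> verts D. g d \<in> {b \<in> verts B. f b = a}}"
      using epiD(2)[OF ge] by auto
    then show "connected_in D {d \<in> verts D. (f \<circ> g) d = a}"
      using monotone_epi_preimage_connected[OF gm(1) c] by simp
  qed
  have coh: "coherent D A (f \<circ> g)" unfolding coherent_def
  proof (intro ballI impI)
    fix a assume a: "a \<in> verts A" "3 \<le> ord A a"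
    obtain b p where b: "b \<in> verts B" "f b = a" "ord B b = ord A a"
      "bij_betw p (components A (verts A - {a})) (components B (verts B - {b}))"
      "\<forall>Ai\<in>components A (verts A - {a}). {x \<in> verts B. f x \<in> Ai} \<subseteq> p Ai"
      using fm(2) a unfolding coherent_def point_of_coherence_def by blast
    obtain d q where d: "d \<in> verts D" "g d = b" "ord D d = ord B b"
      "bij_betw q (components B (verts B - {b})) (components D (verts D - {d}))"
      "\<forall>Bi\<in>components B (verts B - {b}). {x \<in> verts D. g x \<in> Bi} \<subseteq> q Bi"
      using gm(2) b a unfolding coherent_def point_of_coherence_def by fastforce
    have bj: "bij_betw (q \<circ> p) (components A (verts A - {a})) (components D (verts D - {d}))"
      using bij_betw_trans[OF b(4) d(4)] .
    moreover have sb: "\<forall>Ai\<in>components A (verts A - {a}). {x \<in> verts D. (f \<circ> g) x \<in> Ai} \<subseteq> (q \<circ> p) Ai"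
    proof
      fix Ai assume Ai: "Ai \<in> components A (verts A - {a})"
      have pA: "p Ai \<in> components B (verts B - {b})" using b(4) Ai unfolding bij_betw_def by auto
      show "{x \<in> verts D. (f \<circ> g) x \<in> Ai} \<subseteq> (q \<circ> p) Ai"
      proof
        fix x assume x: "x \<in> {x \<in> verts D. (f \<circ> g) x \<in> Ai}"
        then have "g x \<in> p Ai" using b(5) Ai epiD(2)[OF ge] by auto
        then show "x \<in> (q \<circ> p) Ai" using d(5) pA x by auto
      qed
    qed
    have "(f \<circ> g) d = a" "ord D d = ord A a" using b d by auto
    then show "point_of_coherence D A (f \<circ> g) a"
      unfolding point_of_coherence_def using a d(1) bj sb by blast
  qed
  show ?thesis using f g mono coh unfolding GP_mor_def by auto
qed

lemma countable_GP: "countable (GP P)"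
proof -
  have "GP P \<subseteq> {V. finite V} \<times> {E. finite E}"
  proof
    fix G assume "G \<in> GP P"
    then have "is_graph G" using GP_tree graph_tree by blast
    then have "finite (verts G)" "edges G \<subseteq> verts G \<times> verts G" unfolding is_graph_def by auto
    then have "finite (fst G)" "finite (snd G)" unfolding verts_def edges_def by (auto intro: finite_subset)
    then show "G \<in> {V. finite V} \<times> {E. finite E}" by (cases G) auto
  qed
  moreover have "countable ({V :: nat set. finite V} \<times> {E :: (nat \<times> nat) set. finite E})"
    by (intro countable_SIGMA countable_Collect_finite)
  ultimately show ?thesis by (rule countable_subset)
qed


lemma comps_share:
  assumes "is_graph G" "K1 \<in> components G S" "K2 \<in> components G S" "z \<in> K1" "z \<in> K2"
  shows "K1 = K2"
proof -
  obtain x1 x2 where "K1 = cmp G S x1" "K2 = cmp G S x2"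
    using assms(2,3) unfolding components_comp by auto
  then show ?thesis using cmp_eq[OF assms(1)] assms(4,5) by metis
qed

lemma closed_path:
  assumes "(w, w') \<in> (induced_rel G T)\<^sup>*" "w \<in> S"
    and "\<And>q r. (q, r) \<in> edges G \<Longrightarrow> q \<in> S \<Longrightarrow> r \<in> T \<Longrightarrow> r \<in> S"
  shows "w' \<in> S"
  using assms(1,2)
proof (induction rule: rtrancl_induct)
  case (step y z)
  then show ?case using assms(3) by (auto simp: induced_rel_def)
qed simp

lemma coh_comp_iff:
  assumes TA: "is_tree A" and TX: "is_tree X" and h: "epi X A h"
    and a: "a \<in> verts A" and p: "bij_betw p (components A (verts A - {a})) (components X (verts X - {c}))"
    and incl: "\<forall>Ai\<in>components A (verts A - {a}). {x \<in> verts X. h x \<in> Ai} \<subseteq> p Ai"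
    and Ai: "Ai \<in> components A (verts A - {a})" and z: "z \<in> verts X" "h z \<noteq> a"
  shows "z \<in> p Ai \<longleftrightarrow> h z \<in> Ai"
proof
  assume zp: "z \<in> p Ai"
  have GA: "is_graph A" "is_graph X" using TA TX graph_tree by auto
  have hz: "h z \<in> verts A - {a}" using epiD(2)[OF h z(1)] z(2) by auto
  define Ak where "Ak = cmp A (verts A - {a}) (h z)"
  have Ak: "Ak \<in> components A (verts A - {a})" using hz unfolding components_comp Ak_def by auto
  have "h z \<in> Ak" using cmp_self[OF hz] Ak_def by auto
  then have "z \<in> p Ak" using incl Ak z by auto
  moreover have "p Ak \<in> components X (verts X - {c})" "p Ai \<in> components X (verts X - {c})"
    using p Ak Ai unfolding bij_betw_def by auto
  ultimately have "p Ak = p Ai" using comps_share[OF GA(2)] zp by blast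
  then have "Ak = Ai" using p Ak Ai unfolding bij_betw_def inj_on_def by auto
  then show "h z \<in> Ai" using \<open>h z \<in> Ak\<close> by simp
next
  assume "h z \<in> Ai"
  then show "z \<in> p Ai" using incl Ai z by auto
qed

locale amal =
  fixes P :: "nat set" and A B C :: graph and f g :: "nat \<Rightarrow> nat"
  assumes P3: "\<forall>p\<in>P. 3 \<le> p"
    and AGP: "A \<in> GP P" and fm: "GP_mor P B A f" and gm: "GP_mor P C A g"
    and ord1: "\<forall>a\<in>verts A. 1 \<le> ord A a"
begin

lemma BGP: "B \<in> GP P" and CGP: "C \<in> GP P" using fm gm unfolding GP_mor_def by auto

lemma TA: "is_tree A" and TB: "is_tree B" and TC: "is_tree C"
  using AGP BGP CGP GP_tree by auto

lemma GA: "is_graph A" and GB: "is_graph B" and GC: "is_graph C"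
  using TA TB TC graph_tree by auto

lemma fmono: "monotone_epi B A f" and fcoh: "coherent B A f"
  and gmono: "monotone_epi C A g" and gcoh: "coherent C A g"
  using fm gm unfolding GP_mor_def by auto

lemma fe: "epi B A f" and ge: "epi C A g" using fmono gmono unfolding monotone_epi_def by auto

lemma fV: "x \<in> verts B \<Longrightarrow> f x \<in> verts A" and gV: "y \<in> verts C \<Longrightarrow> g y \<in> verts A"
  using epiD(2)[OF fe] epiD(2)[OF ge] by auto

lemma fE: "(x, x') \<in> edges B \<Longrightarrow> (f x, f x') \<in> edges A"
  and gE: "(y, y') \<in> edges C \<Longrightarrow> (g y, g y') \<in> edges A"
  using epi_hom[OF fe GB] epi_hom[OF ge GC] by auto

lemma Bedge: "(x, x') \<in> edges B \<Longrightarrow> x \<in> verts B \<and> x' \<in> verts B"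
  and Cedge: "(y, y') \<in> edges C \<Longrightarrow> y \<in> verts C \<and> y' \<in> verts C"
  and Aedge: "(a, a') \<in> edges A \<Longrightarrow> a \<in> verts A \<and> a' \<in> verts A"
  using is_graphD(2)[OF GB] is_graphD(2)[OF GC] is_graphD(2)[OF GA] by auto

lemma Bsym: "(x, x') \<in> edges B \<Longrightarrow> (x', x) \<in> edges B"
  and Csym: "(y, y') \<in> edges C \<Longrightarrow> (y', y) \<in> edges C"
  and Asym: "(a, a') \<in> edges A \<Longrightarrow> (a', a) \<in> edges A"
  using is_graphD(4)[OF GB] is_graphD(4)[OF GC] is_graphD(4)[OF GA] by auto

lemma Brefl: "x \<in> verts B \<Longrightarrow> (x, x) \<in> edges B"
  and Crefl: "y \<in> verts C \<Longrightarrow> (y, y) \<in> edges C"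
  using is_graphD(3)[OF GB] is_graphD(3)[OF GC] by auto

definition Bf :: "nat \<Rightarrow> nat set" where "Bf a = {x \<in> verts B. f x = a}"
definition Cg :: "nat \<Rightarrow> nat set" where "Cg a = {y \<in> verts C. g y = a}"

lemma Bf_conn: "a \<in> verts A \<Longrightarrow> connected_in B (Bf a)"
  and Cg_conn: "a \<in> verts A \<Longrightarrow> connected_in C (Cg a)"
  using fmono gmono unfolding monotone_epi_def Bf_def Cg_def by auto

lemma ordA: "a \<in> verts A \<Longrightarrow> ord A a = 1 \<or> 3 \<le> ord A a"
  using AGP ord1 P3 unfolding GP_def by fastforce

lemma B_cross:
  assumes "(x, x') \<in> edges B" "(z, z') \<in> edges B" "f x = f z" "f x' = f z'" "f x \<noteq> f x'"
  shows "x = z \<and> x' = z'"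
proof (rule unique_cross_edge[OF TB Bf_conn Bf_conn])
  show "f x \<in> verts A" "f x' \<in> verts A" using fV Bedge assms(1) by auto
  show "Bf (f x) \<inter> Bf (f x') = {}" using assms(5) by (auto simp: Bf_def)
qed (use assms Bedge in \<open>auto simp: Bf_def\<close>)

lemma C_cross:
  assumes "(x, x') \<in> edges C" "(z, z') \<in> edges C" "g x = g z" "g x' = g z'" "g x \<noteq> g x'"
  shows "x = z \<and> x' = z'"
proof (rule unique_cross_edge[OF TC Cg_conn Cg_conn])
  show "g x \<in> verts A" "g x' \<in> verts A" using gV Cedge assms(1) by auto
  show "Cg (g x) \<inter> Cg (g x') = {}" using assms(5) by (auto simp: Cg_def)
qed (use assms Cedge in \<open>auto simp: Cg_def\<close>)

definition be :: "nat \<Rightarrow> nat \<Rightarrow> nat" where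
  "be a a' = (SOME x. \<exists>x'. (x, x') \<in> edges B \<and> f x = a \<and> f x' = a')"
definition ge :: "nat \<Rightarrow> nat \<Rightarrow> nat" where
  "ge a a' = (SOME y. \<exists>y'. (y, y') \<in> edges C \<and> g y = a \<and> g y' = a')"

lemma be_edge:
  assumes "a' \<in> nbrs A a"
  shows "(be a a', be a' a) \<in> edges B" "f (be a a') = a" "be a a' \<in> verts B"
proof -
  have a: "a \<in> verts A" "a' \<in> verts A" "(a, a') \<in> edges A" "a \<noteq> a'"
    using assms Aedge by (auto simp: nbrs_def)
  have ex1: "\<exists>x. \<exists>x'. (x, x') \<in> edges B \<and> f x = a \<and> f x' = a'"
    using epiD(3)[OF fe a(1,2,3)] by blast
  obtain x' where x': "(be a a', x') \<in> edges B" "f (be a a') = a" "f x' = a'"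
    using someI_ex[OF ex1] unfolding be_def by blast
  have ex2: "\<exists>x. \<exists>x'. (x, x') \<in> edges B \<and> f x = a' \<and> f x' = a"
    using epiD(3)[OF fe a(2,1) Asym[OF a(3)]] by blast
  obtain z' where z': "(be a' a, z') \<in> edges B" "f (be a' a) = a'" "f z' = a"
    using someI_ex[OF ex2] unfolding be_def by blast
  have "be a a' = z' \<and> x' = be a' a" using B_cross[OF x'(1) Bsym[OF z'(1)]] x' z' a by auto
  then show "(be a a', be a' a) \<in> edges B" using x' by simp
  show "f (be a a') = a" using x' by simp
  show "be a a' \<in> verts B" using x' Bedge by auto
qed

lemma ge_edge:
  assumes "a' \<in> nbrs A a"
  shows "(ge a a', ge a' a) \<in> edges C" "g (ge a a') = a" "ge a a' \<in> verts C"
proof -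
  have a: "a \<in> verts A" "a' \<in> verts A" "(a, a') \<in> edges A" "a \<noteq> a'"
    using assms Aedge by (auto simp: nbrs_def)
  have ex1: "\<exists>x. \<exists>x'. (x, x') \<in> edges C \<and> g x = a \<and> g x' = a'"
    using epiD(3)[OF ge a(1,2,3)] by blast
  obtain x' where x': "(ge a a', x') \<in> edges C" "g (ge a a') = a" "g x' = a'"
    using someI_ex[OF ex1] unfolding ge_def by blast
  have ex2: "\<exists>x. \<exists>x'. (x, x') \<in> edges C \<and> g x = a' \<and> g x' = a"
    using epiD(3)[OF ge a(2,1) Asym[OF a(3)]] by blast
  obtain z' where z': "(ge a' a, z') \<in> edges C" "g (ge a' a) = a'" "g z' = a"
    using someI_ex[OF ex2] unfolding ge_def by blast
  have "ge a a' = z' \<and> x' = ge a' a" using C_cross[OF x'(1) Csym[OF z'(1)]] x' z' a by auto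
  then show "(ge a a', ge a' a) \<in> edges C" using x' by simp
  show "g (ge a a') = a" using x' by simp
  show "ge a a' \<in> verts C" using x' Cedge by auto
qed

lemma nbrs_sym: "a' \<in> nbrs A a \<Longrightarrow> a \<in> nbrs A a'"
  using Asym Aedge by (auto simp: nbrs_def)

lemma be_cross:
  assumes "(x, x') \<in> edges B" "f x \<noteq> f x'"
  shows "f x' \<in> nbrs A (f x)" "x = be (f x) (f x')" "x' = be (f x') (f x)"
proof -
  show n: "f x' \<in> nbrs A (f x)" using fE[OF assms(1)] assms fV Bedge by (auto simp: nbrs_def)
  have "x = be (f x) (f x') \<and> x' = be (f x') (f x)"
    using B_cross[OF assms(1) be_edge(1)[OF n]] be_edge(2)[OF n] be_edge(2)[OF nbrs_sym[OF n]] assms(2)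
    by auto
  then show "x = be (f x) (f x')" "x' = be (f x') (f x)" by auto
qed

lemma ge_cross:
  assumes "(y, y') \<in> edges C" "g y \<noteq> g y'"
  shows "g y' \<in> nbrs A (g y)" "y = ge (g y) (g y')" "y' = ge (g y') (g y)"
proof -
  show n: "g y' \<in> nbrs A (g y)" using gE[OF assms(1)] assms gV Cedge by (auto simp: nbrs_def)
  have "y = ge (g y) (g y') \<and> y' = ge (g y') (g y)"
    using C_cross[OF assms(1) ge_edge(1)[OF n]] ge_edge(2)[OF n] ge_edge(2)[OF nbrs_sym[OF n]] assms(2)
    by auto
  then show "y = ge (g y) (g y')" "y' = ge (g y') (g y)" by auto
qed

end


context amal
begin

definition hubok :: "nat \<Rightarrow> nat \<Rightarrow> bool" where
  "hubok a c \<longleftrightarrow> c \<in> Cg a \<and>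
     (\<forall>y \<in> Cg a - {c}. \<exists>!a'. a' \<in> nbrs A a \<and> ge a a' \<noteq> c \<and> (y, ge a a') \<in> (induced_rel C (Cg a - {c}))\<^sup>*) \<and>
     (3 \<le> ord C c \<longrightarrow> ord C c = ord A a \<and>
        (\<exists>p. bij_betw p (components A (verts A - {a})) (components C (verts C - {c})) \<and>
             (\<forall>Ai\<in>components A (verts A - {a}). {x \<in> verts C. g x \<in> Ai} \<subseteq> p Ai)))"

lemma hub_branch:
  assumes a: "a \<in> verts A" "3 \<le> ord A a"
  shows "\<exists>c. hubok a c"
proof -
  obtain c p where c: "c \<in> verts C" "g c = a" "ord C c = ord A a"
    and p: "bij_betw p (components A (verts A - {a})) (components C (verts C - {c}))"
    and incl: "\<forall>Ai\<in>components A (verts A - {a}). {x \<in> verts C. g x \<in> Ai} \<subseteq> p Ai"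
    using gcoh a unfolding coherent_def point_of_coherence_def by blast
  let ?SC = "verts C - {c}" and ?SA = "verts A - {a}"
  have cC: "c \<in> Cg a" using c by (simp add: Cg_def)
  have uniq: "\<exists>!a'. a' \<in> nbrs A a \<and> ge a a' \<noteq> c \<and> (y, ge a a') \<in> (induced_rel C (Cg a - {c}))\<^sup>*"
    if y: "y \<in> Cg a - {c}" for y
  proof -
    have ySC: "y \<in> ?SC" using y by (auto simp: Cg_def)
    define Q where "Q = cmp C ?SC y"
    have Qc: "Q \<in> components C ?SC" using ySC unfolding components_comp Q_def by auto
    then obtain Ai where Ai: "Ai \<in> components A ?SA" "p Ai = Q"
      using p unfolding bij_betw_def by (metis imageE)
    obtain ai where ai: "ai \<in> nbrs A a" "Ai = cmp A ?SA ai"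
      using tree_nbrs_comp_bij[OF TA a(1)] Ai(1) unfolding bij_betw_def by auto
    have F1: "z \<in> Q \<longleftrightarrow> g z \<in> Ai" if "z \<in> verts C" "g z \<noteq> a" for z
      using coh_comp_iff[OF TA TC ge a(1) p incl Ai(1) that] Ai(2) by simp
    have nbA: "a'' \<in> Ai \<Longrightarrow> a'' \<in> nbrs A a \<Longrightarrow> a'' = ai" for a''
      using tree_comp_nbr_unique[OF TA a(1) ai(1)] ai(2) by blast
    have aiA: "ai \<in> Ai" using ai cmp_self[of ai ?SA A] by (auto simp: nbrs_def)
    have gai: "ge ai a \<in> Q"
    proof -
      have "a \<in> nbrs A ai" using nbrs_sym[OF ai(1)] .
      then have "ge ai a \<in> verts C" "g (ge ai a) = ai" using ge_edge by auto
      moreover have "ai \<noteq> a" using ai(1) by (auto simp: nbrs_def)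
      ultimately show ?thesis using F1 aiA by auto
    qed
    then have "(y, ge ai a) \<in> (induced_rel C ?SC)\<^sup>*" by (simp add: Q_def cmp_def)
    moreover have "y \<in> Cg a - {c}" "ge ai a \<notin> Cg a - {c}"
      using y ge_edge(2)[OF nbrs_sym[OF ai(1)]] ai(1) by (auto simp: Cg_def nbrs_def)
    ultimately obtain s t where st: "(y, s) \<in> (induced_rel C (?SC \<inter> (Cg a - {c})))\<^sup>*"
      "s \<in> Cg a - {c}" "t \<notin> Cg a - {c}" "(s, t) \<in> induced_rel C ?SC"
      using exit_lemma by metis
    have st2: "(s, t) \<in> edges C" "t \<in> ?SC" "s \<in> ?SC" using st(4) by (auto simp: induced_rel_def)
    have gt: "g t \<noteq> a" using st(3) st2 by (auto simp: Cg_def)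
    have gs: "g s = a" using st(2) by (auto simp: Cg_def)
    have sQ: "s \<in> Q"
    proof -
      have "?SC \<inter> (Cg a - {c}) \<subseteq> ?SC" by auto
      then have "(y, s) \<in> (induced_rel C ?SC)\<^sup>*" using induced_mono st(1) by blast
      then show ?thesis using st2 by (simp add: Q_def cmp_def)
    qed
    have tQ: "t \<in> Q" using cmp_closed[of s C ?SC y t] sQ st2 by (simp add: Q_def)
    have "g t \<in> Ai" using F1[of t] tQ gt st2 by auto
    moreover have "g t \<in> nbrs A a" "s = ge a (g t)" using ge_cross[OF st2(1)] gs gt by auto
    ultimately have gtai: "g t = ai" "s = ge a ai" using nbA by auto
    have "?SC \<inter> (Cg a - {c}) = Cg a - {c}" by (auto simp: Cg_def)
    then have ex: "ai \<in> nbrs A a \<and> ge a ai \<noteq> c \<and> (y, ge a ai) \<in> (induced_rel C (Cg a - {c}))\<^sup>*"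
      using st(1,2) gtai ai(1) by auto
    have un: "a'' = ai" if a'': "a'' \<in> nbrs A a" "ge a a'' \<noteq> c" "(y, ge a a'') \<in> (induced_rel C (Cg a - {c}))\<^sup>*"
      for a''
    proof -
      have "Cg a - {c} \<subseteq> ?SC" by (auto simp: Cg_def)
      then have "(y, ge a a'') \<in> (induced_rel C ?SC)\<^sup>*" using induced_mono a''(3) by blast
      moreover have "ge a a'' \<in> ?SC" using ge_edge(3)[OF a''(1)] a''(2) by auto
      ultimately have g1: "ge a a'' \<in> Q" by (simp add: Q_def cmp_def)
      have e: "(ge a a'', ge a'' a) \<in> edges C" using ge_edge(1)[OF a''(1)] .
      have g2: "g (ge a'' a) = a''" "ge a'' a \<in> verts C" using ge_edge[OF nbrs_sym[OF a''(1)]] by auto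
      have ne: "a'' \<noteq> a" using a''(1) by (auto simp: nbrs_def)
      have "ge a'' a \<noteq> c" using g2 c ne by auto
      then have "ge a'' a \<in> Q" using cmp_closed[OF _ e] g1 g2 by (simp add: Q_def)
      then have "a'' \<in> Ai" using F1 g2 ne by auto
      then show ?thesis using nbA a''(1) by auto
    qed
    show ?thesis using ex un by blast
  qed
  have "hubok a c" unfolding hubok_def
  proof (intro conjI ballI impI)
    show "c \<in> Cg a" by (rule cC)
  next
    fix y assume "y \<in> Cg a - {c}"
    then show "\<exists>!a'. a' \<in> nbrs A a \<and> ge a a' \<noteq> c \<and> (y, ge a a') \<in> (induced_rel C (Cg a - {c}))\<^sup>*"
      by (rule uniq)
  next
    show "ord C c = ord A a" by (rule c(3))
    show "\<exists>p. bij_betw p (components A (verts A - {a})) (components C (verts C - {c})) \<and>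
          (\<forall>Ai\<in>components A (verts A - {a}). {x \<in> verts C. g x \<in> Ai} \<subseteq> p Ai)"
      using p incl by blast
  qed
  then show ?thesis by blast
qed

lemma hub_leaf:
  assumes a: "a \<in> verts A" "ord A a = 1"
  shows "\<exists>c. hubok a c"
proof -
  obtain a' where a': "nbrs A a = {a'}" using a(2) by (auto simp: ord_nbrs card_1_singleton_iff)
  have a'n: "a' \<in> nbrs A a" using a' by auto
  let ?v = "ge a a'"
  have vC: "?v \<in> Cg a" using ge_edge[OF a'n] by (simp add: Cg_def)
  have nbC: "z \<in> nbrs C y \<Longrightarrow> y \<in> Cg a \<Longrightarrow> g z \<noteq> a \<Longrightarrow> y = ?v" for y z
  proof -
    assume z: "z \<in> nbrs C y" "y \<in> Cg a" "g z \<noteq> a"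
    have e: "(y, z) \<in> edges C" using z by (auto simp: nbrs_def)
    have "g y = a" using z by (simp add: Cg_def)
    then show "y = ?v" using ge_cross[OF e] z(3) a' by auto
  qed
  show ?thesis
  proof (cases "Cg a = {?v}")
    case True
    have "hubok a ?v" unfolding hubok_def
    proof (intro conjI impI)
      show "?v \<in> Cg a" by (rule vC)
      show "\<forall>y\<in>Cg a - {?v}. \<exists>!a''. a'' \<in> nbrs A a \<and> ge a a'' \<noteq> ?v \<and> (y, ge a a'') \<in> (induced_rel C (Cg a - {?v}))\<^sup>*"
        using True by auto
      assume o3: "3 \<le> ord C ?v"
      have "nbrs C ?v \<subseteq> {ge a' a}"
      proof
        fix z assume z: "z \<in> nbrs C ?v"
        have zv: "z \<noteq> ?v" "z \<in> verts C" using z by (auto simp: nbrs_def)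
        have gz: "g z \<noteq> a" using True zv by (auto simp: Cg_def)
        have e: "(?v, z) \<in> edges C" using z by (auto simp: nbrs_def)
        have "g ?v = a" using vC by (simp add: Cg_def)
        then have "z = ge (g z) a" "g z \<in> nbrs A a" using ge_cross[OF e] gz by auto
        then show "z \<in> {ge a' a}" using a' by auto
      qed
      then have "card (nbrs C ?v) \<le> card {ge a' a}" by (intro card_mono) auto
      then have "ord C ?v \<le> 1" unfolding ord_nbrs by simp
      then show "ord C ?v = ord A a" using o3 by simp
      then show "\<exists>p. bij_betw p (components A (verts A - {a})) (components C (verts C - {?v})) \<and>
          (\<forall>Ai\<in>components A (verts A - {a}). {x \<in> verts C. g x \<in> Ai} \<subseteq> p Ai)"
        using o3 \<open>ord C ?v \<le> 1\<close> by simp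
    qed
    then show ?thesis by blast
  next
    case False
    define Ca where "Ca = (Cg a, induced_rel C (Cg a))"
    have vCa: "verts Ca = Cg a" "edges Ca = induced_rel C (Cg a)" by (simp_all add: Ca_def verts_def edges_def)
    have sub: "Cg a \<subseteq> verts C" by (auto simp: Cg_def)
    have finCg: "finite (Cg a)" using sub is_graphD(1)[OF GC] finite_subset by auto
    have indeq: "S \<subseteq> Cg a \<Longrightarrow> induced_rel Ca S = induced_rel C S" for S
      using vCa by (auto simp: induced_rel_def)
    have GCa: "is_graph Ca" unfolding is_graph_def vCa using finCg Crefl Csym
      by (auto simp: induced_rel_def Cg_def)
    have cCa: "connected_in Ca (Cg a)"
      using Cg_conn[OF a(1)] indeq[of "Cg a"] vCa unfolding connected_in_def by auto
    have ncCa: "\<not> has_cycle Ca"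
    proof
      assume "has_cycle Ca"
      then have "has_cycle C" unfolding has_cycle_def vCa using sub by (auto simp: induced_rel_def)
      then show False using TC no_cycle_tree by auto
    qed
    have TCa: "is_tree Ca" unfolding is_tree_def using GCa cCa ncCa vCa by simp
    have c2: "2 \<le> card (verts Ca)"
    proof -
      obtain w where "w \<in> Cg a" "w \<noteq> ?v" using False vC by blast
      then have "{?v, w} \<subseteq> Cg a" using vC by auto
      then have "card {?v, w} \<le> card (Cg a)" using finCg card_mono by blast
      then show ?thesis using \<open>w \<noteq> ?v\<close> vCa by simp
    qed
    obtain l where l: "l \<in> Cg a" "l \<noteq> ?v" "ord Ca l = 1" "connected_in Ca (Cg a - {l})"
      using leaf_lemma[OF TCa _ c2, of ?v] vC vCa by auto
    have "hubok a l" unfolding hubok_def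
    proof (intro conjI impI ballI)
      show "l \<in> Cg a" by (rule l(1))
    next
      fix y assume y: "y \<in> Cg a - {l}"
      have "(y, ?v) \<in> (induced_rel Ca (Cg a - {l}))\<^sup>*" using l(4) y vC l(2) unfolding connected_in_def by auto
      then have "(y, ?v) \<in> (induced_rel C (Cg a - {l}))\<^sup>*" using indeq[of "Cg a - {l}"] by auto
      then show "\<exists>!a''. a'' \<in> nbrs A a \<and> ge a a'' \<noteq> l \<and> (y, ge a a'') \<in> (induced_rel C (Cg a - {l}))\<^sup>*"
        using a' l(2) by auto
    next
      assume o3: "3 \<le> ord C l"
      have "nbrs C l \<subseteq> nbrs Ca l"
      proof
        fix z assume z: "z \<in> nbrs C l"
        have "g z = a" using nbC[OF z l(1)] l(2) by auto
        then show "z \<in> nbrs Ca l" using z l(1) vCa by (auto simp: nbrs_def Cg_def induced_rel_def)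
      qed
      then have "ord C l \<le> ord Ca l" unfolding ord_nbrs using finite_nbrs[OF GCa] card_mono by blast
      then show "ord C l = ord A a" using o3 l(3) by simp
      then show "\<exists>p. bij_betw p (components A (verts A - {a})) (components C (verts C - {l})) \<and>
          (\<forall>Ai\<in>components A (verts A - {a}). {x \<in> verts C. g x \<in> Ai} \<subseteq> p Ai)"
        using o3 a(2) by simp
    qed
    then show ?thesis by blast
  qed
qed

lemma hub_exists: "a \<in> verts A \<Longrightarrow> \<exists>c. hubok a c"
  using ordA hub_branch hub_leaf by blast

definition hub :: "nat \<Rightarrow> nat" where "hub a = (SOME c. hubok a c)"

lemma hub_ok: "a \<in> verts A \<Longrightarrow> hubok a (hub a)"
  unfolding hub_def using hub_exists someI_ex by metis

end


lemma lift_path: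
  assumes "(x, x') \<in> (induced_rel G S)\<^sup>*"
    and "\<And>u v. (u, v) \<in> induced_rel G S \<Longrightarrow> (\<phi> u, \<phi> v) \<in> induced_rel H T"
  shows "(\<phi> x, \<phi> x') \<in> (induced_rel H T)\<^sup>*"
  using assms(1)
proof (induction rule: rtrancl_induct)
  case (step y z)
  then show ?case using assms(2) by (meson rtrancl_into_rtrancl)
qed simp

context amal
begin

lemma hub_in: "a \<in> verts A \<Longrightarrow> hub a \<in> verts C \<and> g (hub a) = a"
  using hub_ok unfolding hubok_def Cg_def by auto

definition NH :: "nat \<Rightarrow> bool" where "NH y \<longleftrightarrow> y \<in> verts C \<and> y \<noteq> hub (g y)"

definition nb :: "nat \<Rightarrow> nat" where
  "nb y = (THE a'. a' \<in> nbrs A (g y) \<and> ge (g y) a' \<noteq> hub (g y) \<and>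
              (y, ge (g y) a') \<in> (induced_rel C (Cg (g y) - {hub (g y)}))\<^sup>*)"

definition phi :: "nat \<Rightarrow> nat" where "phi y = be (g y) (nb y)"

lemma nb_ex1:
  assumes "NH y"
  shows "\<exists>!a'. a' \<in> nbrs A (g y) \<and> ge (g y) a' \<noteq> hub (g y) \<and>
              (y, ge (g y) a') \<in> (induced_rel C (Cg (g y) - {hub (g y)}))\<^sup>*"
proof -
  have "g y \<in> verts A" "y \<in> Cg (g y) - {hub (g y)}" using assms gV by (auto simp: NH_def Cg_def)
  then show ?thesis using hub_ok[of "g y"] unfolding hubok_def by blast
qed

lemma nb_prop:
  assumes "NH y"
  shows "nb y \<in> nbrs A (g y)" "ge (g y) (nb y) \<noteq> hub (g y)"
    "(y, ge (g y) (nb y)) \<in> (induced_rel C (Cg (g y) - {hub (g y)}))\<^sup>*"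
  using theI'[OF nb_ex1[OF assms]] unfolding nb_def by auto

lemma nb_eq:
  assumes "NH y" "a' \<in> nbrs A (g y)" "ge (g y) a' \<noteq> hub (g y)"
    "(y, ge (g y) a') \<in> (induced_rel C (Cg (g y) - {hub (g y)}))\<^sup>*"
  shows "nb y = a'"
  unfolding nb_def using the1_equality[OF nb_ex1[OF assms(1)]] assms by blast

lemma nb_path:
  assumes y: "NH y" and p: "(y, z) \<in> (induced_rel C (Cg (g y) - {hub (g y)}))\<^sup>*"
  shows "NH z" "g z = g y" "nb z = nb y"
proof -
  have zin: "z = y \<or> z \<in> Cg (g y) - {hub (g y)}" using induced_in[OF p] by auto
  then show gz: "g z = g y" by (auto simp: Cg_def)
  show nz: "NH z" using zin y gz by (auto simp: NH_def Cg_def)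
  have "(z, y) \<in> (induced_rel C (Cg (g y) - {hub (g y)}))\<^sup>*" using induced_sym[OF GC p] .
  then have "(z, ge (g y) (nb y)) \<in> (induced_rel C (Cg (g y) - {hub (g y)}))\<^sup>*"
    using nb_prop(3)[OF y] by (rule rtrancl_trans)
  then show "nb z = nb y" using nb_eq[OF nz] nb_prop[OF y] gz by simp
qed

lemma nb_ge:
  assumes "a' \<in> nbrs A a" "ge a a' \<noteq> hub a"
  shows "NH (ge a a')" "nb (ge a a') = a'"
proof -
  have g: "g (ge a a') = a" "ge a a' \<in> verts C" using ge_edge[OF assms(1)] by auto
  show n: "NH (ge a a')" using g assms(2) by (simp add: NH_def)
  show "nb (ge a a') = a'" using nb_eq[OF n] g assms by simp
qed

lemma phi_prop: "NH y \<Longrightarrow> phi y \<in> verts B \<and> f (phi y) = g y"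
  using be_edge[OF nb_prop(1)] unfolding phi_def by auto

lemma phi_ge: "a' \<in> nbrs A a \<Longrightarrow> ge a a' \<noteq> hub a \<Longrightarrow> phi (ge a a') = be a a'"
  using nb_ge ge_edge(2) unfolding phi_def by simp

lemma hub_NH: "y \<in> verts C \<Longrightarrow> \<not> NH y \<Longrightarrow> y = hub (g y)"
  by (simp add: NH_def)

definition VD :: "(nat \<times> nat) set" where
  "VD = {p. (fst p \<in> verts B \<and> snd p = hub (f (fst p))) \<or> (NH (snd p) \<and> fst p = phi (snd p))}"

definition ED :: "((nat \<times> nat) \<times> (nat \<times> nat)) set" where
  "ED = {(p, q). p \<in> VD \<and> q \<in> VD \<and>
     ((snd p = snd q \<and> (fst p, fst q) \<in> edges B) \<or>
      (snd p \<noteq> snd q \<and> (snd p, snd q) \<in> edges C \<and>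
        (if g (snd p) = g (snd q) then fst p = fst q else (fst p, fst q) \<in> edges B)))}"

definition D :: graph where
  "D = (prod_encode ` VD, {(prod_encode p, prod_encode q) | p q. (p, q) \<in> ED})"

definition h1 :: "nat \<Rightarrow> nat" where "h1 n = fst (prod_decode n)"
definition h2 :: "nat \<Rightarrow> nat" where "h2 n = snd (prod_decode n)"
definition mk :: "nat \<Rightarrow> nat \<Rightarrow> nat" where "mk x y = prod_encode (x, y)"

lemma h_mk[simp]: "h1 (mk x y) = x" "h2 (mk x y) = y"
  by (simp_all add: h1_def h2_def mk_def)

lemma mk_h: "mk (h1 n) (h2 n) = n"
  by (simp add: h1_def h2_def mk_def)

lemma n_eq: "h1 n = h1 m \<Longrightarrow> h2 n = h2 m \<Longrightarrow> n = m"
  by (metis mk_h)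

lemma dec: "prod_decode n = (h1 n, h2 n)"
  by (simp add: h1_def h2_def)

lemma vD_iff: "n \<in> verts D \<longleftrightarrow> (h1 n \<in> verts B \<and> h2 n = hub (f (h1 n))) \<or> (NH (h2 n) \<and> h1 n = phi (h2 n))"
proof -
  have "n \<in> verts D \<longleftrightarrow> prod_decode n \<in> VD"
    unfolding D_def verts_def by (metis (no_types, lifting) fst_conv image_iff prod_decode_inverse prod_encode_inverse)
  then show ?thesis by (simp add: VD_def dec)
qed

lemma eD_iff: "(n, m) \<in> edges D \<longleftrightarrow> n \<in> verts D \<and> m \<in> verts D \<and>
     ((h2 n = h2 m \<and> (h1 n, h1 m) \<in> edges B) \<or>
      (h2 n \<noteq> h2 m \<and> (h2 n, h2 m) \<in> edges C \<and>
        (if g (h2 n) = g (h2 m) then h1 n = h1 m else (h1 n, h1 m) \<in> edges B)))"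
proof -
  have vv: "n \<in> verts D \<longleftrightarrow> prod_decode n \<in> VD" for n
    unfolding D_def verts_def by (metis (no_types, lifting) fst_conv image_iff prod_decode_inverse prod_encode_inverse)
  have "(n, m) \<in> edges D \<longleftrightarrow> (prod_decode n, prod_decode m) \<in> ED"
  proof
    assume "(n, m) \<in> edges D"
    then obtain p q where "(p, q) \<in> ED" "n = prod_encode p" "m = prod_encode q"
      unfolding D_def edges_def by auto
    then show "(prod_decode n, prod_decode m) \<in> ED" by simp
  next
    assume "(prod_decode n, prod_decode m) \<in> ED"
    then show "(n, m) \<in> edges D" unfolding D_def edges_def
      by (metis (mono_tags, lifting) mem_Collect_eq prod_decode_inverse snd_conv)
  qed
  then show ?thesis unfolding ED_def vv by (simp add: dec)
qed

lemma vD_props: "n \<in> verts D \<Longrightarrow> h1 n \<in> verts B \<and> h2 n \<in> verts C \<and> f (h1 n) = g (h2 n)"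
  unfolding vD_iff using hub_in fV phi_prop by (auto simp: NH_def)

lemma vD_nh: "n \<in> verts D \<Longrightarrow> NH (h2 n) \<Longrightarrow> h1 n = phi (h2 n)"
  unfolding vD_iff using hub_in fV by (auto simp: NH_def)

lemma vD_nh_unique: "n \<in> verts D \<Longrightarrow> m \<in> verts D \<Longrightarrow> NH (h2 n) \<Longrightarrow> h2 n = h2 m \<Longrightarrow> n = m"
  using vD_nh n_eq by metis

lemma vD_hub: "n \<in> verts D \<Longrightarrow> \<not> NH (h2 n) \<Longrightarrow> h2 n = hub (f (h1 n))"
  using vD_props hub_NH by metis

lemma mk_hub: "x \<in> verts B \<Longrightarrow> mk x (hub (f x)) \<in> verts D"
  by (simp add: vD_iff)

lemma mk_nh: "NH y \<Longrightarrow> mk (phi y) y \<in> verts D"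
  by (simp add: vD_iff)

lemma mk_hub2: "x \<in> verts B \<Longrightarrow> f x = g y \<Longrightarrow> \<not> NH y \<Longrightarrow> y \<in> verts C \<Longrightarrow> mk x y \<in> verts D"
  using hub_NH by (simp add: vD_iff)

lemma eD_verts: "(n, m) \<in> edges D \<Longrightarrow> n \<in> verts D \<and> m \<in> verts D"
  by (simp add: eD_iff)

lemma eD_hom1: "(n, m) \<in> edges D \<Longrightarrow> (h1 n, h1 m) \<in> edges B"
  unfolding eD_iff using vD_props Brefl by (auto split: if_splits)

lemma eD_hom2: "(n, m) \<in> edges D \<Longrightarrow> (h2 n, h2 m) \<in> edges C"
  unfolding eD_iff using vD_props Crefl by (auto split: if_splits)

lemma eD_refl: "n \<in> verts D \<Longrightarrow> (n, n) \<in> edges D"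
  unfolding eD_iff using vD_props Brefl by auto

lemma eD_sym: "(n, m) \<in> edges D \<Longrightarrow> (m, n) \<in> edges D"
  unfolding eD_iff using Bsym Csym by (auto split: if_splits)

lemma GD: "is_graph D"
  unfolding is_graph_def
proof (intro conjI allI impI ballI)
  have "verts D \<subseteq> prod_encode ` (verts B \<times> verts C)"
  proof
    fix n assume "n \<in> verts D"
    then have "(h1 n, h2 n) \<in> verts B \<times> verts C" using vD_props by auto
    then show "n \<in> prod_encode ` (verts B \<times> verts C)" by (metis dec image_eqI prod_decode_inverse)
  qed
  moreover have "finite (verts B \<times> verts C)" using is_graphD(1)[OF GB] is_graphD(1)[OF GC] by auto
  ultimately show "finite (verts D)" using finite_subset by blast
  show "edges D \<subseteq> verts D \<times> verts D" using eD_verts by auto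
qed (auto intro: eD_refl eD_sym)

lemma vert_cross:
  assumes "a2 \<in> nbrs A a1"
  shows "mk (be a1 a2) (ge a1 a2) \<in> verts D"
proof (cases "NH (ge a1 a2)")
  case True
  then have "ge a1 a2 \<noteq> hub a1" using ge_edge(2)[OF assms] by (simp add: NH_def)
  then have "phi (ge a1 a2) = be a1 a2" using phi_ge[OF assms] by simp
  then show ?thesis using mk_nh[OF True] by simp
next
  case False
  then show ?thesis using mk_hub2 be_edge[OF assms] ge_edge[OF assms] by simp
qed

lemma cross_edge:
  assumes "a2 \<in> nbrs A a1"
  shows "(mk (be a1 a2) (ge a1 a2), mk (be a2 a1) (ge a2 a1)) \<in> edges D"
proof -
  have n: "a1 \<in> nbrs A a2" using nbrs_sym[OF assms] .
  have ne: "a1 \<noteq> a2" using assms by (auto simp: nbrs_def)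
  show ?thesis unfolding eD_iff using vert_cross[OF assms] vert_cross[OF n] ge_edge[OF assms] ge_edge[OF n]
      be_edge[OF assms] ne by auto
qed

lemma lift_C:
  assumes e: "(y1, y2) \<in> edges C"
  shows "\<exists>n1 n2. n1 \<in> verts D \<and> n2 \<in> verts D \<and> h2 n1 = y1 \<and> h2 n2 = y2 \<and> (n1, n2) \<in> edges D"
proof -
  have y: "y1 \<in> verts C" "y2 \<in> verts C" using Cedge[OF e] by auto
  have over: "\<exists>n. n \<in> verts D \<and> h2 n = y" if "y \<in> verts C" for y
  proof (cases "NH y")
    case True then show ?thesis using mk_nh by (intro exI[of _ "mk (phi y) y"]) auto
  next
    case False
    have "g y \<in> verts A" using gV that by auto
    then obtain x where "x \<in> verts B" "f x = g y" using epiD(1)[OF fe] by (metis imageE)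
    then show ?thesis using mk_hub2 False that by (intro exI[of _ "mk x y"]) auto
  qed
  show ?thesis
  proof (cases "y1 = y2")
    case True
    then show ?thesis using over[OF y(1)] eD_refl by blast
  next
    case ne: False
    show ?thesis
    proof (cases "g y1 = g y2")
      case False
      have n: "g y2 \<in> nbrs A (g y1)" "y1 = ge (g y1) (g y2)" "y2 = ge (g y2) (g y1)"
        using ge_cross[OF e False] by auto
      show ?thesis using cross_edge[OF n(1)] n eD_verts by (metis h_mk(2))
    next
      case True
      have "NH y1 \<or> NH y2" using ne True hub_NH y by metis
      then show ?thesis
      proof
        assume n1: "NH y1"
        show ?thesis
        proof (cases "NH y2")
          case n2: True
          have "(y1, y2) \<in> (induced_rel C (Cg (g y1) - {hub (g y1)}))\<^sup>*"
            using n1 n2 True e y by (intro induced_edge) (auto simp: NH_def Cg_def)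
          then have "nb y2 = nb y1" "g y2 = g y1" using nb_path[OF n1] by blast+
          then have "phi y2 = phi y1" unfolding phi_def by simp
          then show ?thesis using mk_nh[OF n1] mk_nh[OF n2] ne e True
            by (intro exI[of _ "mk (phi y1) y1"] exI[of _ "mk (phi y2) y2"]) (simp add: eD_iff)
        next
          case n2: False
          have "mk (phi y1) y2 \<in> verts D" using mk_hub2 phi_prop[OF n1] n2 True y by simp
          then show ?thesis using mk_nh[OF n1] ne e True
            by (intro exI[of _ "mk (phi y1) y1"] exI[of _ "mk (phi y1) y2"]) (simp add: eD_iff)
        qed
      next
        assume n2: "NH y2"
        have n1: "\<not> NH y1 \<or> NH y1" by simp
        show ?thesis
        proof (cases "NH y1")
          case n1: True
          have "(y1, y2) \<in> (induced_rel C (Cg (g y1) - {hub (g y1)}))\<^sup>*"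
            using n1 n2 True e y by (intro induced_edge) (auto simp: NH_def Cg_def)
          then have "nb y2 = nb y1" "g y2 = g y1" using nb_path[OF n1] by blast+
          then have "phi y2 = phi y1" unfolding phi_def by simp
          then show ?thesis using mk_nh[OF n1] mk_nh[OF n2] ne e True
            by (intro exI[of _ "mk (phi y1) y1"] exI[of _ "mk (phi y2) y2"]) (simp add: eD_iff)
        next
          case n1: False
          have "mk (phi y2) y1 \<in> verts D" using mk_hub2 phi_prop[OF n2] n1 True y by simp
          then show ?thesis using mk_nh[OF n2] ne e True
            by (intro exI[of _ "mk (phi y2) y1"] exI[of _ "mk (phi y2) y2"]) (simp add: eD_iff)
        qed
      qed
    qed
  qed
qed

lemma lift_B:
  assumes e: "(x1, x2) \<in> edges B"
  shows "\<exists>n1 n2. n1 \<in> verts D \<and> n2 \<in> verts D \<and> h1 n1 = x1 \<and> h1 n2 = x2 \<and> (n1, n2) \<in> edges D"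
proof -
  have x: "x1 \<in> verts B" "x2 \<in> verts B" using Bedge[OF e] by auto
  show ?thesis
  proof (cases "f x1 = f x2")
    case True
    then show ?thesis using mk_hub[OF x(1)] mk_hub[OF x(2)] e
      by (intro exI[of _ "mk x1 (hub (f x1))"] exI[of _ "mk x2 (hub (f x2))"]) (simp add: eD_iff)
  next
    case False
    have n: "f x2 \<in> nbrs A (f x1)" "x1 = be (f x1) (f x2)" "x2 = be (f x2) (f x1)"
      using be_cross[OF e False] by auto
    show ?thesis using cross_edge[OF n(1)] n eD_verts by (metis h_mk(1))
  qed
qed

lemma h2_epi: "epi D C h2"
  unfolding epi_def
proof (intro conjI ballI)
  show "h2 ` verts D = verts C"
  proof
    show "h2 ` verts D \<subseteq> verts C" using vD_props by auto
    show "verts C \<subseteq> h2 ` verts D"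
    proof
      fix y assume "y \<in> verts C"
      then obtain n1 n2 where "n1 \<in> verts D" "h2 n1 = y" using lift_C[OF Crefl] by blast
      then show "y \<in> h2 ` verts D" by blast
    qed
  qed
next
  fix a1 a2 assume "a1 \<in> verts C" "a2 \<in> verts C"
  show "((a1, a2) \<in> edges C) = (\<exists>b1\<in>verts D. \<exists>b2\<in>verts D. h2 b1 = a1 \<and> h2 b2 = a2 \<and> (b1, b2) \<in> edges D)"
    using lift_C eD_hom2 by blast
qed

lemma h1_epi: "epi D B h1"
  unfolding epi_def
proof (intro conjI ballI)
  show "h1 ` verts D = verts B"
  proof
    show "h1 ` verts D \<subseteq> verts B" using vD_props by auto
    show "verts B \<subseteq> h1 ` verts D"
    proof
      fix y assume "y \<in> verts B"
      then obtain n1 n2 where "n1 \<in> verts D" "h1 n1 = y" using lift_B[OF Brefl] by blast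
      then show "y \<in> h1 ` verts D" by blast
    qed
  qed
next
  fix a1 a2 assume "a1 \<in> verts B" "a2 \<in> verts B"
  show "((a1, a2) \<in> edges B) = (\<exists>b1\<in>verts D. \<exists>b2\<in>verts D. h1 b1 = a1 \<and> h1 b2 = a2 \<and> (b1, b2) \<in> edges D)"
    using lift_B eD_hom1 by blast
qed

end


context amal
begin

lemma h2_fiber_conn:
  assumes y: "y \<in> verts C"
  shows "connected_in D {n \<in> verts D. h2 n = y}"
proof (cases "NH y")
  case True
  have "{n \<in> verts D. h2 n = y} = {mk (phi y) y}"
    using mk_nh[OF True] vD_nh_unique True by fastforce
  then show ?thesis using mk_nh[OF True] unfolding connected_in_def by auto
next
  case False
  let ?F = "{n \<in> verts D. h2 n = y}"
  have hy: "y = hub (g y)" using hub_NH[OF y False] .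
  have gy: "g y \<in> verts A" using gV[OF y] .
  obtain x0 where x0: "x0 \<in> verts B" "f x0 = g y" using epiD(1)[OF fe] gy by (metis imageE)
  have ne: "?F \<noteq> {}" using mk_hub2[OF x0 False y] by (intro ex_in_conv[THEN iffD1]) (auto intro: exI[of _ "mk x0 y"])
  have "(n, m) \<in> (induced_rel D ?F)\<^sup>*" if nm: "n \<in> ?F" "m \<in> ?F" for n m
  proof -
    have hn: "h1 n \<in> Bf (g y)" "h1 m \<in> Bf (g y)" using nm vD_props by (auto simp: Bf_def)
    then have "(h1 n, h1 m) \<in> (induced_rel B (Bf (g y)))\<^sup>*" using Bf_conn[OF gy] unfolding connected_in_def by auto
    then have "(mk (h1 n) y, mk (h1 m) y) \<in> (induced_rel D ?F)\<^sup>*"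
    proof (rule lift_path)
      fix u v assume uv: "(u, v) \<in> induced_rel B (Bf (g y))"
      then have "u \<in> Bf (g y)" "v \<in> Bf (g y)" "(u, v) \<in> edges B" by (auto simp: induced_rel_def)
      then have "mk u y \<in> verts D" "mk v y \<in> verts D" "(mk u y, mk v y) \<in> edges D"
        using mk_hub2[OF _ _ False y] by (auto simp: Bf_def eD_iff)
      then show "(mk u y, mk v y) \<in> induced_rel D ?F" by (auto simp: induced_rel_def)
    qed
    then show ?thesis using nm mk_h by (metis (mono_tags, lifting) mem_Collect_eq)
  qed
  then show ?thesis using ne unfolding connected_in_def by auto
qed

lemma h1_fiber_conn:
  assumes x: "x \<in> verts B"
  shows "connected_in D {n \<in> verts D. h1 n = x}"
proof -
  let ?F = "{n \<in> verts D. h1 n = x}"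
  define a where "a = f x"
  define c where "c = hub a"
  have aA: "a \<in> verts A" using fV[OF x] by (simp add: a_def)
  have cC: "c \<in> Cg a" using hub_in[OF aA] by (simp add: c_def Cg_def)
  define n0 where "n0 = mk x c"
  have n0: "n0 \<in> ?F" using mk_hub[OF x] by (simp add: n0_def c_def a_def)
  have to0: "(n, n0) \<in> (induced_rel D ?F)\<^sup>*" if n: "n \<in> ?F" for n
  proof (cases "NH (h2 n)")
    case False
    then have "h2 n = hub (f (h1 n))" using vD_hub n by blast
    then have "h2 n = c" using n by (simp add: c_def a_def)
    moreover have "h1 n = x" using n by simp
    ultimately have "n = n0" unfolding n0_def using n_eq h_mk by metis
    then show ?thesis by simp
  next
    case True
    define y where "y = h2 n"
    have nD: "n \<in> verts D" "h1 n = x" using n by auto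
    have yv1: "NH y" using True by (simp add: y_def)
    have yv2: "phi y = x" using vD_nh[OF nD(1) True] nD(2) by (simp add: y_def)
    have yv3: "g y = a" using vD_props[OF nD(1)] nD(2) by (simp add: y_def a_def)
    note yv = yv1 yv2 yv3
    have yC: "y \<in> Cg a - {c}" using yv by (auto simp: NH_def Cg_def c_def)
    have "(y, c) \<in> (induced_rel C (Cg a))\<^sup>*" using Cg_conn[OF aA] yC cC unfolding connected_in_def by auto
    from exit_lemma[OF this, of "Cg a - {c}"] yC
    obtain s t where st: "(y, s) \<in> (induced_rel C (Cg a \<inter> (Cg a - {c})))\<^sup>*" "s \<in> Cg a - {c}"
      "t \<notin> Cg a - {c}" "(s, t) \<in> induced_rel C (Cg a)" by auto
    have tc: "t = c" using st(3,4) by (auto simp: induced_rel_def)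
    have eq: "Cg a \<inter> (Cg a - {c}) = Cg (g y) - {hub (g y)}" using yv by (auto simp: c_def)
    have lift: "(n, mk x z) \<in> (induced_rel D ?F)\<^sup>*" if "(y, z) \<in> (induced_rel C (Cg (g y) - {hub (g y)}))\<^sup>*" for z
      using that
    proof (induction rule: rtrancl_induct)
      case base
      then show ?case using n mk_h yv by (metis (mono_tags, lifting) mem_Collect_eq rtrancl.rtrancl_refl y_def)
    next
      case (step z1 z2)
      have z1: "NH z1" "g z1 = g y" "nb z1 = nb y" using nb_path[OF yv(1) step(1)] by auto
      have z2: "NH z2" "g z2 = g y" "nb z2 = nb y" using nb_path[OF yv(1) rtrancl_into_rtrancl[OF step(1,2)]] by auto
      have p: "phi z1 = x" "phi z2 = x" using z1 z2 yv unfolding phi_def by auto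
      have e: "(z1, z2) \<in> edges C" using step(2) by (auto simp: induced_rel_def)
      have "(mk x z1, mk x z2) \<in> edges D"
        using mk_nh[OF z1(1)] mk_nh[OF z2(1)] p e z1 z2 Brefl phi_prop[OF z1(1)] by (auto simp: eD_iff)
      then have "(mk x z1, mk x z2) \<in> induced_rel D ?F"
        using mk_nh[OF z1(1)] mk_nh[OF z2(1)] p by (auto simp: induced_rel_def)
      then show ?case using step(3) by (rule rtrancl_into_rtrancl[rotated])
    qed
    have ns: "(n, mk x s) \<in> (induced_rel D ?F)\<^sup>*" using lift st(1) eq by simp
    have ys: "(y, s) \<in> (induced_rel C (Cg (g y) - {hub (g y)}))\<^sup>*" using st(1) eq by simp
    have s1: "NH s" "g s = g y" "nb s = nb y" using nb_path[OF yv(1) ys] by auto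
    have "phi s = phi y" using s1 by (simp add: phi_def)
    then have sNH: "NH s" "phi s = x" using s1 yv by auto
    have "(mk x s, n0) \<in> edges D"
      using mk_nh[OF sNH(1)] n0 sNH st(2,4) tc yv by (auto simp: eD_iff n0_def induced_rel_def Cg_def c_def)
    then have "(mk x s, n0) \<in> induced_rel D ?F" using mk_nh[OF sNH(1)] sNH n0 by (auto simp: induced_rel_def)
    then show ?thesis using ns by (rule rtrancl_into_rtrancl[rotated])
  qed
  show ?thesis unfolding connected_in_def
  proof (intro conjI ballI)
    show "?F \<noteq> {}" using n0 by auto
    show "?F \<subseteq> verts D" by auto
  next
    fix n m assume "n \<in> ?F" "m \<in> ?F"
    then show "(n, m) \<in> (induced_rel D ?F)\<^sup>*" using to0 induced_sym[OF GD] by (meson rtrancl_trans)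
  qed
qed

lemma h2_mono: "monotone_epi D C h2"
  unfolding monotone_epi_def using h2_epi h2_fiber_conn by auto

lemma h1_mono: "monotone_epi D B h1"
  unfolding monotone_epi_def using h1_epi h1_fiber_conn by auto

lemma D_conn: "connected_in D (verts D)"
proof -
  have "connected_in C (verts C)" using TC unfolding is_tree_def by auto
  from monotone_epi_preimage_connected[OF h2_mono this]
  show ?thesis using vD_props by (metis (no_types, lifting) Collect_cong Collect_mem_eq)
qed

lemma U2:
  assumes e: "(n, m) \<in> edges D" "(n', m') \<in> edges D" "h2 n = h2 n'" "h2 m = h2 m'" "h2 n \<noteq> h2 m"
  shows "n = n' \<and> m = m'"
proof -
  have v: "n \<in> verts D" "m \<in> verts D" "n' \<in> verts D" "m' \<in> verts D" using e eD_verts by auto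
  show ?thesis
  proof (cases "g (h2 n) = g (h2 m)")
    case False
    have b: "(h1 n, h1 m) \<in> edges B" "(h1 n', h1 m') \<in> edges B" using e False by (auto simp: eD_iff)
    have "f (h1 n) = g (h2 n)" "f (h1 m) = g (h2 m)" "f (h1 n') = g (h2 n')" "f (h1 m') = g (h2 m')"
      using v vD_props by auto
    then have "h1 n = h1 n' \<and> h1 m = h1 m'" using B_cross[OF b] e(3,4) False by auto
    then show ?thesis using e(3,4) n_eq by blast
  next
    case True
    have h1eq: "h1 n = h1 m" "h1 n' = h1 m'" using e True by (auto simp: eD_iff)
    have "NH (h2 n) \<or> NH (h2 m)"
      using vD_props[OF v(1)] vD_props[OF v(2)] hub_NH True e(5) by metis
    then show ?thesis
    proof
      assume "NH (h2 n)"
      then have nn: "n = n'" using vD_nh_unique v e(3) by blast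
      then have "h1 m = h1 m'" using h1eq by simp
      then show ?thesis using nn e(4) n_eq by blast
    next
      assume "NH (h2 m)"
      then have mm: "m = m'" using vD_nh_unique v e(4) by blast
      then have "h1 n = h1 n'" using h1eq by simp
      then show ?thesis using mm e(3) n_eq by blast
    qed
  qed
qed

lemma U1:
  assumes e: "(n, m) \<in> edges D" "(n', m') \<in> edges D" "h1 n = h1 n'" "h1 m = h1 m'" "h1 n \<noteq> h1 m"
    and s: "h2 n = h2 m"
  shows "n = n' \<and> m = m'"
proof -
  have v: "n \<in> verts D" "m \<in> verts D" "n' \<in> verts D" "m' \<in> verts D" using e eD_verts by auto
  have hn: "\<not> NH (h2 n)" using vD_nh_unique v s e(5) by blast
  have hm: "\<not> NH (h2 m)" using hn s by simp
  have fa: "f (h1 n) = f (h1 m)" using vD_props v s by metis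
  show ?thesis
  proof (cases "h2 n' = h2 m'")
    case True
    have "\<not> NH (h2 n')" using vD_nh_unique v True e(3,4,5) by metis
    then have "h2 n' = hub (f (h1 n'))" using vD_hub v by blast
    moreover have "h2 n = hub (f (h1 n))" using vD_hub v hn by blast
    ultimately have "h2 n' = h2 n" using e(3) by simp
    then show ?thesis using e(3,4) s True n_eq by metis
  next
    case False
    have "g (h2 n') = g (h2 m')" using vD_props v e(3,4) fa by metis
    then have "h1 n' = h1 m'" using e(2) False by (auto simp: eD_iff)
    then show ?thesis using e(3,4,5) by simp
  qed
qed

lemma D_no_cycle: "\<not> has_cycle D"
proof (rule cut_no_cycle[OF GD])
  fix n m assume e: "(n, m) \<in> edges D" "n \<noteq> m"
  show "\<exists>S. n \<in> S \<and> m \<notin> S \<and> (\<forall>s t. (s, t) \<in> edges D \<and> s \<in> S \<and> t \<notin> S \<longrightarrow> s = n \<and> t = m)"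
  proof (cases "h2 n = h2 m")
    case False
    show ?thesis
    proof (rule cut_pullback[where h = h2 and X = C])
      show "\<And>s t. (s, t) \<in> edges D \<Longrightarrow> (h2 s, h2 t) \<in> edges C" by (rule eD_hom2)
      show "\<And>s t. (s, t) \<in> edges D \<Longrightarrow> h2 s = h2 n \<Longrightarrow> h2 t = h2 m \<Longrightarrow> s = n \<and> t = m"
        using U2 e(1) False by metis
      show "\<exists>S. h2 n \<in> S \<and> h2 m \<notin> S \<and> (\<forall>s t. (s, t) \<in> edges C \<and> s \<in> S \<and> t \<notin> S \<longrightarrow> s = h2 n \<and> t = h2 m)"
        using tree_cut[OF TC eD_hom2[OF e(1)] False] .
    qed
  next
    case True
    then have ne: "h1 n \<noteq> h1 m" using e(2) n_eq by blast
    show ?thesis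
    proof (rule cut_pullback[where h = h1 and X = B])
      show "\<And>s t. (s, t) \<in> edges D \<Longrightarrow> (h1 s, h1 t) \<in> edges B" by (rule eD_hom1)
      show "\<And>s t. (s, t) \<in> edges D \<Longrightarrow> h1 s = h1 n \<Longrightarrow> h1 t = h1 m \<Longrightarrow> s = n \<and> t = m"
        using U1 e(1) True ne by metis
      show "\<exists>S. h1 n \<in> S \<and> h1 m \<notin> S \<and> (\<forall>s t. (s, t) \<in> edges B \<and> s \<in> S \<and> t \<notin> S \<longrightarrow> s = h1 n \<and> t = h1 m)"
        using tree_cut[OF TB eD_hom1[OF e(1)] ne] .
    qed
  qed
qed

lemma TD: "is_tree D"
  unfolding is_tree_def using GD D_conn D_no_cycle by auto

end


context amal
begin

lemma ord_nh:
  assumes n: "n \<in> verts D" "NH (h2 n)"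
  shows "ord D n = ord C (h2 n)"
proof -
  have "bij_betw h2 (nbrs D n) (nbrs C (h2 n))"
    unfolding bij_betw_def
  proof (intro conjI)
    show "inj_on h2 (nbrs D n)"
    proof (rule inj_onI)
      fix m1 m2 assume m: "m1 \<in> nbrs D n" "m2 \<in> nbrs D n" "h2 m1 = h2 m2"
      have e: "(n, m1) \<in> edges D" "(n, m2) \<in> edges D" "m1 \<in> verts D" using m by (auto simp: nbrs_def)
      have "h2 n \<noteq> h2 m1" using vD_nh_unique[OF n(1) e(3) n(2)] m by (auto simp: nbrs_def)
      then show "m1 = m2" using U2[OF e(1,2)] m(3) by auto
    qed
    show "h2 ` nbrs D n = nbrs C (h2 n)"
    proof
      show "h2 ` nbrs D n \<subseteq> nbrs C (h2 n)"
      proof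
        fix z assume "z \<in> h2 ` nbrs D n"
        then obtain m where m: "m \<in> nbrs D n" "z = h2 m" by auto
        have e: "(n, m) \<in> edges D" "m \<in> verts D" "m \<noteq> n" using m by (auto simp: nbrs_def)
        have "h2 m \<noteq> h2 n" using vD_nh_unique[OF n(1) e(2) n(2)] e(3) by auto
        then show "z \<in> nbrs C (h2 n)" using eD_hom2[OF e(1)] vD_props[OF e(2)] m by (auto simp: nbrs_def)
      qed
    next
      show "nbrs C (h2 n) \<subseteq> h2 ` nbrs D n"
      proof
        fix z assume z: "z \<in> nbrs C (h2 n)"
        then obtain n1 n2 where nn: "n1 \<in> verts D" "n2 \<in> verts D" "h2 n1 = h2 n" "h2 n2 = z" "(n1, n2) \<in> edges D"
          using lift_C by (auto simp: nbrs_def) blast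
        have "n1 = n" using vD_nh_unique[OF n(1) nn(1) n(2)] nn(3) by simp
        moreover have "n2 \<noteq> n" using nn z by (auto simp: nbrs_def)
        ultimately have "n2 \<in> nbrs D n" using nn by (auto simp: nbrs_def)
        then show "z \<in> h2 ` nbrs D n" using nn by blast
      qed
    qed
  qed
  then show ?thesis by (simp add: ord_nbrs bij_betw_same_card)
qed

lemma ord_hub:
  assumes n: "n \<in> verts D" "\<not> NH (h2 n)"
  shows "ord D n = ord B (h1 n)"
proof -
  define x where "x = h1 n"
  define a where "a = f x"
  define c where "c = h2 n"
  have hc: "c = hub a" using vD_hub[OF n] by (simp add: c_def a_def x_def)
  have xB: "x \<in> verts B" using vD_props[OF n(1)] by (simp add: x_def)
  have aA: "a \<in> verts A" using fV[OF xB] by (simp add: a_def)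
  have cC: "c \<in> verts C" "g c = a" using hub_in[OF aA] hc by auto
  have nmk: "n = mk x c" using mk_h by (simp add: x_def c_def)
  define \<psi> where "\<psi> m = (if h1 m = x then be (nb (h2 m)) a else h1 m)" for m
  have K1: "NH (h2 m) \<and> g (h2 m) = a \<and> be a (nb (h2 m)) = x \<and> nb (h2 m) \<in> nbrs A a \<and> h2 m \<in> nbrs C c"
    if m: "m \<in> nbrs D n" "h1 m = x" for m
  proof -
    have e: "(n, m) \<in> edges D" "m \<in> verts D" "m \<noteq> n" using m by (auto simp: nbrs_def)
    have ne: "h2 m \<noteq> c" using e(3) m(2) n_eq by (auto simp: x_def c_def)
    have ce: "(c, h2 m) \<in> edges C" using eD_hom2[OF e(1)] by (simp add: c_def)
    have fm: "f (h1 m) = g (h2 m)" using vD_props[OF e(2)] by simp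
    have ga: "g (h2 m) = a" using fm m(2) by (simp add: a_def)
    have nh: "NH (h2 m)" using ne ga hc vD_props[OF e(2)] by (simp add: NH_def)
    have "phi (h2 m) = x" using vD_nh[OF e(2) nh] m(2) by simp
    then have "be a (nb (h2 m)) = x" using ga by (simp add: phi_def)
    moreover have "nb (h2 m) \<in> nbrs A a" using nb_prop(1)[OF nh] ga by simp
    moreover have "h2 m \<in> nbrs C c" using ce ne vD_props[OF e(2)] by (auto simp: nbrs_def)
    ultimately show ?thesis using nh ga by simp
  qed
  have bij: "bij_betw \<psi> (nbrs D n) (nbrs B x)"
    unfolding bij_betw_def
  proof (intro conjI)
    show "inj_on \<psi> (nbrs D n)"
    proof (rule inj_onI)
      fix m1 m2 assume m: "m1 \<in> nbrs D n" "m2 \<in> nbrs D n" "\<psi> m1 = \<psi> m2"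
      have e1: "(n, m1) \<in> edges D" "m1 \<in> verts D" "m1 \<noteq> n" using m by (auto simp: nbrs_def)
      have e2: "(n, m2) \<in> edges D" "m2 \<in> verts D" "m2 \<noteq> n" using m by (auto simp: nbrs_def)
      have across: "h2 mm = c \<or> (f (h1 mm) \<noteq> a \<and> c = ge a (f (h1 mm)))"
        if mm: "(n, mm) \<in> edges D" "mm \<in> verts D" "h1 mm \<noteq> x" for mm
      proof (cases "h2 mm = c")
        case False
        have ce: "(c, h2 mm) \<in> edges C" using eD_hom2[OF mm(1)] by (simp add: c_def)
        have gd: "g (h2 mm) \<noteq> a"
        proof
          assume "g (h2 mm) = a"
          then have "h1 n = h1 mm" using mm(1) False cC by (auto simp: eD_iff c_def)
          then show False using mm(3) by (simp add: x_def)
        qed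
        have "c = ge (g c) (g (h2 mm))" using ge_cross[OF ce] gd cC by auto
        moreover have "f (h1 mm) = g (h2 mm)" using vD_props[OF mm(2)] by simp
        ultimately show ?thesis using gd cC by simp
      qed simp
      show "m1 = m2"
      proof (cases "h1 m1 = x")
        case True
        note k1 = K1[OF m(1) True]
        show ?thesis
        proof (cases "h1 m2 = x")
          case True2: True
          note k2 = K1[OF m(2) True2]
          have "be (nb (h2 m1)) a = be (nb (h2 m2)) a" using m(3) True True2 by (simp add: \<psi>_def)
          then have nbeq: "nb (h2 m1) = nb (h2 m2)"
            using be_edge(2)[OF nbrs_sym[OF conjunct1[OF conjunct2[OF conjunct2[OF conjunct2[OF k1]]]]]]
              be_edge(2)[OF nbrs_sym[OF conjunct1[OF conjunct2[OF conjunct2[OF conjunct2[OF k2]]]]]] by metis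
          have p1: "(h2 m1, ge a (nb (h2 m1))) \<in> (induced_rel C (Cg a - {c}))\<^sup>*"
            using nb_prop(3)[of "h2 m1"] k1 hc by simp
          have p2: "(h2 m2, ge a (nb (h2 m1))) \<in> (induced_rel C (Cg a - {c}))\<^sup>*"
            using nb_prop(3)[of "h2 m2"] k2 hc nbeq by simp
          have "(h2 m1, h2 m2) \<in> (induced_rel C (Cg a - {c}))\<^sup>*"
            using p1 induced_sym[OF GC p2] by (rule rtrancl_trans)
          then have "(h2 m1, h2 m2) \<in> (induced_rel C (verts C - {c}))\<^sup>*"
            by (rule induced_mono[rotated]) (auto simp: Cg_def)
          then have "h2 m1 = h2 m2" using nbrs_sep[OF TC cC(1)] k1 k2 by blast
          then show ?thesis using True True2 n_eq by metis
        next
          case False2: False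
          have a': "nb (h2 m1) \<in> nbrs A a" using k1 by simp
          have "f (\<psi> m1) = nb (h2 m1)" using True be_edge(2)[OF nbrs_sym[OF a']] by (simp add: \<psi>_def)
          moreover have "\<psi> m2 = h1 m2" using False2 by (simp add: \<psi>_def)
          ultimately have fm2: "f (h1 m2) = nb (h2 m1)" using m(3) by simp
          then have fne: "f (h1 m2) \<noteq> a" using a' by (auto simp: nbrs_def)
          have "h2 m2 \<noteq> c" using fne vD_props[OF e2(2)] cC by auto
          then have "c = ge a (nb (h2 m1))" using across[OF e2(1,2) False2] fm2 by simp
          moreover have "ge a (nb (h2 m1)) \<noteq> hub a" using nb_prop(2)[of "h2 m1"] k1 by simp
          ultimately show ?thesis using hc by simp
        qed
      next
        case False
        show ?thesis
        proof (cases "h1 m2 = x")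
          case True2: True
          note k2 = K1[OF m(2) True2]
          have a': "nb (h2 m2) \<in> nbrs A a" using k2 by simp
          have "f (\<psi> m2) = nb (h2 m2)" using True2 be_edge(2)[OF nbrs_sym[OF a']] by (simp add: \<psi>_def)
          moreover have "\<psi> m1 = h1 m1" using False by (simp add: \<psi>_def)
          ultimately have fm1: "f (h1 m1) = nb (h2 m2)" using m(3) by simp
          then have fne: "f (h1 m1) \<noteq> a" using a' by (auto simp: nbrs_def)
          have "h2 m1 \<noteq> c" using fne vD_props[OF e1(2)] cC by auto
          then have "c = ge a (nb (h2 m2))" using across[OF e1(1,2) False] fm1 by simp
          moreover have "ge a (nb (h2 m2)) \<noteq> hub a" using nb_prop(2)[of "h2 m2"] k2 by simp
          ultimately show ?thesis using hc by simp
        next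
          case False2: False
          have h1eq: "h1 m1 = h1 m2" using m(3) False False2 by (simp add: \<psi>_def)
          show ?thesis
          proof (cases "h2 m1 = c")
            case True
            then show ?thesis using U1[OF e1(1) e2(1) refl h1eq] False by (simp add: x_def c_def)
          next
            case c1: False
            show ?thesis
            proof (cases "h2 m2 = c")
              case True
              then show ?thesis using U1[OF e2(1) e1(1) refl h1eq[symmetric]] False2 by (simp add: x_def c_def)
            next
              case c2: False
              have ce1: "(c, h2 m1) \<in> edges C" "(c, h2 m2) \<in> edges C"
                using eD_hom2[OF e1(1)] eD_hom2[OF e2(1)] by (simp_all add: c_def)
              have "g (h2 m1) = g (h2 m2)" using vD_props[OF e1(2)] vD_props[OF e2(2)] h1eq by metis
              moreover have "g (h2 m1) \<noteq> g c" using across[OF e1(1,2) False] c1 vD_props[OF e1(2)] cC by auto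
              ultimately have "h2 m1 = h2 m2" using C_cross[OF ce1] by auto
              then show ?thesis using h1eq n_eq by blast
            qed
          qed
        qed
      qed
    qed
    show "\<psi> ` nbrs D n = nbrs B x"
    proof
      show "\<psi> ` nbrs D n \<subseteq> nbrs B x"
      proof
        fix z assume "z \<in> \<psi> ` nbrs D n"
        then obtain m where m: "m \<in> nbrs D n" "z = \<psi> m" by auto
        have e: "(n, m) \<in> edges D" "m \<in> verts D" using m by (auto simp: nbrs_def)
        show "z \<in> nbrs B x"
        proof (cases "h1 m = x")
          case True
          note k = K1[OF m(1) True]
          have a': "nb (h2 m) \<in> nbrs A a" using k by simp
          have "(be a (nb (h2 m)), be (nb (h2 m)) a) \<in> edges B" "f (be (nb (h2 m)) a) = nb (h2 m)"
            "be (nb (h2 m)) a \<in> verts B"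
            using be_edge[OF a'] be_edge[OF nbrs_sym[OF a']] by auto
          moreover have "nb (h2 m) \<noteq> a" using a' by (auto simp: nbrs_def)
          ultimately show ?thesis using m(2) True k a_def by (auto simp: nbrs_def \<psi>_def)
        next
          case False
          then show ?thesis using eD_hom1[OF e(1)] vD_props[OF e(2)] m(2) by (auto simp: nbrs_def \<psi>_def x_def)
        qed
      qed
    next
      show "nbrs B x \<subseteq> \<psi> ` nbrs D n"
      proof
        fix x' assume x': "x' \<in> nbrs B x"
        have ex: "(x, x') \<in> edges B" "x' \<noteq> x" "x' \<in> verts B" using x' by (auto simp: nbrs_def)
        show "x' \<in> \<psi> ` nbrs D n"
        proof (cases "f x' = a")
          case True
          let ?m = "mk x' c"
          have mv: "?m \<in> verts D" using mk_hub[OF ex(3)] True hc by simp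
          have "(n, ?m) \<in> edges D" using mv n(1) ex(1) by (simp add: eD_iff x_def c_def)
          moreover have "?m \<noteq> n" using ex(2) nmk by (metis h_mk(1))
          ultimately have "?m \<in> nbrs D n" using mv by (auto simp: nbrs_def)
          moreover have "\<psi> ?m = x'" using ex(2) by (simp add: \<psi>_def)
          ultimately show ?thesis by force
        next
          case False
          have bc: "f x' \<in> nbrs A a" "x = be a (f x')" "x' = be (f x') a"
            using be_cross[OF ex(1)] False by (auto simp: a_def)
          define a' where "a' = f x'"
          show ?thesis
          proof (cases "ge a a' = c")
            case True
            let ?m = "mk (be a' a) (ge a' a)"
            have ce: "(mk (be a a') (ge a a'), ?m) \<in> edges D" using cross_edge[OF bc(1)] by (simp add: a'_def)
            then have ce2: "(n, ?m) \<in> edges D" using True bc nmk by (simp add: a'_def)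
            have "?m \<noteq> n" using bc False nmk by (metis h_mk(1) a'_def ex(2))
            then have "?m \<in> nbrs D n" using ce2 eD_verts by (auto simp: nbrs_def)
            moreover have "\<psi> ?m = x'" using bc ex(2) by (simp add: \<psi>_def a'_def)
            ultimately show ?thesis by force
          next
            case False2: False
            have gaC: "ge a a' \<in> Cg a" using ge_edge[OF bc(1)] by (simp add: Cg_def a'_def)
            have cCg: "c \<in> Cg a" using cC by (simp add: Cg_def)
            have "(ge a a', c) \<in> (induced_rel C (Cg a))\<^sup>*" using Cg_conn[OF aA] gaC cCg unfolding connected_in_def by auto
            from exit_lemma[OF this, of "Cg a - {c}"] gaC False2
            obtain s t where st: "(ge a a', s) \<in> (induced_rel C (Cg a \<inter> (Cg a - {c})))\<^sup>*" "s \<in> Cg a - {c}"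
              "t \<notin> Cg a - {c}" "(s, t) \<in> induced_rel C (Cg a)" by auto
            have tc: "t = c" using st(3,4) by (auto simp: induced_rel_def)
            have nhg: "NH (ge a a')" "nb (ge a a') = a'" using nb_ge[OF bc(1)] False2 hc by (auto simp: a'_def)
            have gga: "g (ge a a') = a" using ge_edge(2)[OF bc(1)] by (simp add: a'_def)
            have eq: "Cg a \<inter> (Cg a - {c}) = Cg (g (ge a a')) - {hub (g (ge a a'))}" using gga hc by auto
            have sp: "NH s" "g s = a" "nb s = a'" using nb_path[OF nhg(1)] st(1) eq nhg gga by auto
            have ps: "phi s = x" using sp bc by (simp add: phi_def a'_def)
            let ?m = "mk x s"
            have mv: "?m \<in> verts D" using mk_nh[OF sp(1)] ps by simp
            have sc: "(c, s) \<in> edges C" "s \<noteq> c" using st(2,4) tc Csym by (auto simp: induced_rel_def)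
            have "(n, ?m) \<in> edges D" using mv n(1) sc sp cC by (simp add: eD_iff x_def c_def)
            moreover have "?m \<noteq> n" using sc nmk by (metis h_mk(2))
            ultimately have "?m \<in> nbrs D n" using mv by (auto simp: nbrs_def)
            moreover have "\<psi> ?m = x'" using sp bc by (simp add: \<psi>_def a'_def)
            ultimately show ?thesis by force
          qed
        qed
      qed
    qed
  qed
  then show ?thesis by (simp add: ord_nbrs bij_betw_same_card x_def)
qed

lemma DGP: "D \<in> GP P"
  unfolding GP_def
proof (intro CollectI conjI ballI)
  show "is_tree D" by (rule TD)
  fix n assume n: "n \<in> verts D"
  show "ord D n \<le> 1 \<or> ord D n \<in> P"
  proof (cases "NH (h2 n)")
    case True
    then show ?thesis using ord_nh[OF n True] CGP vD_props[OF n] unfolding GP_def by auto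
  next
    case False
    then show ?thesis using ord_hub[OF n False] BGP vD_props[OF n] unfolding GP_def by auto
  qed
qed

end


lemma comp_closed2:
  assumes "K \<in> components G S" "v \<in> K" "(v, v') \<in> edges G" "v' \<in> S"
  shows "v' \<in> K"
proof -
  obtain z where "K = cmp G S z" using assms(1) unfolding components_comp by auto
  then show ?thesis using cmp_closed assms by metis
qed

lemma comp_sub2: "K \<in> components G S \<Longrightarrow> K \<subseteq> S"
  unfolding components_comp using cmp_sub by blast

context amal
begin

lemma NH_hub: "a \<in> verts A \<Longrightarrow> \<not> NH (hub a)"
  using hub_in by (simp add: NH_def)

lemma coh_h1:
  assumes x: "x \<in> verts B" "3 \<le> ord B x"
  shows "point_of_coherence D B h1 x"
proof -
  define a where "a = f x"
  define c where "c = hub a"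
  define d where "d = mk x c"
  have aA: "a \<in> verts A" using fV[OF x(1)] by (simp add: a_def)
  have dV: "d \<in> verts D" using mk_hub[OF x(1)] by (simp add: d_def c_def a_def)
  have nhc: "\<not> NH c" using NH_hub[OF aA] by (simp add: c_def)
  have dord: "ord D d = ord B x" using ord_hub[OF dV] nhc by (simp add: d_def)
  show ?thesis
  proof (rule coh_lemma[OF TD TB h1_mono x(1) x(2) dV _ dord])
    show "h1 d = x" by (simp add: d_def)
  next
    fix u u' w w' assume uu: "u \<in> nbrs B x" "u' \<in> nbrs B x" "u \<noteq> u'" "w \<in> verts D" "w' \<in> verts D"
      "h1 w = u" "h1 w' = u'"
    define K where "K = cmp B (verts B - {x}) u"
    have uK: "u \<in> K" using uu cmp_self[of u "verts B - {x}" B] by (auto simp: K_def nbrs_def)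
    have Ksub: "K \<subseteq> verts B - {x}" using cmp_sub[of B "verts B - {x}" u] by (simp add: K_def)
    have nbK: "v \<in> nbrs B x \<Longrightarrow> v \<in> K \<Longrightarrow> v = u" for v
      using tree_comp_nbr_unique[OF TB x(1) uu(1)] by (auto simp: K_def)
    define S where "S = {m \<in> verts D. m \<noteq> d \<and> (h1 m \<in> K \<or> (h1 m = x \<and> NH (h2 m) \<and> be (nb (h2 m)) a = u))}"
    have closed: "r \<in> S" if qr: "(q, r) \<in> edges D" "q \<in> S" "r \<in> verts D - {d}" for q r
    proof -
      have eB: "(h1 q, h1 r) \<in> edges B" and eC: "(h2 q, h2 r) \<in> edges C"
        using eD_hom1[OF qr(1)] eD_hom2[OF qr(1)] by auto
      have qv: "q \<in> verts D" "r \<in> verts D" "r \<noteq> d" using qr by (auto simp: S_def)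
      have rnd: "h1 r = x \<Longrightarrow> NH (h2 r)"
      proof (rule ccontr)
        assume "h1 r = x" "\<not> NH (h2 r)"
        then have "h2 r = c" using vD_hub[OF qv(2)] by (simp add: c_def a_def)
        then have "r = d" using \<open>h1 r = x\<close> n_eq by (simp add: d_def)
        then show False using qv by simp
      qed
      have gfr: "f (h1 r) = g (h2 r)" "f (h1 q) = g (h2 q)" using vD_props qv by auto
      show ?thesis
      proof (cases "h1 q \<in> K")
        case True
        have qx: "h1 q \<noteq> x" using True Ksub by auto
        show ?thesis
        proof (cases "h1 r = x")
          case False
          have "h1 r \<in> K" using cmp_closed[OF True[unfolded K_def] eB] False vD_props[OF qv(2)]
            by (simp add: K_def)
          then show ?thesis using qv by (simp add: S_def)
        next
          case rx: True
          have nr: "NH (h2 r)" using rnd rx by simp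
          have hq: "h2 q \<noteq> h2 r"
          proof
            assume "h2 q = h2 r"
            then have "q = r" using vD_nh_unique[OF qv(2,1)] nr by metis
            then show False using qx rx by simp
          qed
          have gne: "g (h2 q) \<noteq> g (h2 r)"
          proof
            assume "g (h2 q) = g (h2 r)"
            then have "h1 q = h1 r" using qr(1) hq by (auto simp: eD_iff)
            then show False using qx rx by simp
          qed
          have ga: "g (h2 r) = a" using gfr rx by (simp add: a_def)
          have gc: "g (h2 q) \<in> nbrs A (g (h2 r))" "h2 r = ge (g (h2 r)) (g (h2 q))"
            using ge_cross[OF Csym[OF eC]] gne by auto
          have "h2 r \<noteq> hub a" using nr ga by (simp add: NH_def)
          then have nbr: "nb (h2 r) = g (h2 q)" using nb_ge(2)[of "g (h2 q)" a] gc ga by simp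
          have "h1 q = be (f (h1 q)) (f x)" using be_cross[OF eB] rx gfr gne by auto
          then have "be (nb (h2 r)) a = h1 q" using nbr gfr by (simp add: a_def)
          moreover have "h1 q \<in> nbrs B x" using eB rx qx vD_props[OF qv(1)] Bsym by (auto simp: nbrs_def)
          ultimately have "be (nb (h2 r)) a = u" using nbK True by simp
          then show ?thesis using qv rx nr by (simp add: S_def)
        qed
      next
        case False
        then have qq: "h1 q = x" "NH (h2 q)" "be (nb (h2 q)) a = u" using qr by (auto simp: S_def)
        show ?thesis
        proof (cases "h2 r = h2 q")
          case True
          then have "r = q" using vD_nh_unique[OF qv(1,2)] qq by metis
          then show ?thesis using qr by simp
        next
          case hne: False
          show ?thesis
          proof (cases "g (h2 r) = g (h2 q)")
            case True
            then have rx: "h1 r = x" using qr(1) hne qq by (auto simp: eD_iff)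
            have nr: "NH (h2 r)" using rnd rx by simp
            have gq: "g (h2 q) = a" using gfr qq by (simp add: a_def)
            have "(h2 q, h2 r) \<in> (induced_rel C (Cg (g (h2 q)) - {hub (g (h2 q))}))\<^sup>*"
              using nr qq True eC by (intro induced_edge) (auto simp: NH_def Cg_def)
            then have "nb (h2 r) = nb (h2 q)" using nb_path[OF qq(2)] by blast
            then show ?thesis using qv rx nr qq by (simp add: S_def)
          next
            case gne: False
            have gq: "g (h2 q) = a" using gfr qq by (simp add: a_def)
            have gc: "g (h2 r) \<in> nbrs A (g (h2 q))" "h2 q = ge (g (h2 q)) (g (h2 r))"
              using ge_cross[OF eC] gne by auto
            have "h2 q \<noteq> hub a" using qq gq by (simp add: NH_def)
            then have nbq: "nb (h2 q) = g (h2 r)" using nb_ge(2)[of "g (h2 r)" a] gc gq by simp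
            have "h1 r = be (f (h1 r)) (f (h1 q))" using be_cross[OF eB] gne gfr by auto
            then have "h1 r = u" using qq nbq gfr by (simp add: a_def)
            then show ?thesis using qv uK by (simp add: S_def)
          qed
        qed
      qed
    qed
    show "(w, w') \<notin> (induced_rel D (verts D - {d}))\<^sup>*"
    proof
      assume p: "(w, w') \<in> (induced_rel D (verts D - {d}))\<^sup>*"
      have wS: "w \<in> S" using uu uK by (auto simp: S_def d_def nbrs_def)
      have "w' \<in> S" using closed_path[OF p wS] closed by blast
      moreover have "u' \<notin> K" using nbK uu by auto
      moreover have "u' \<noteq> x" using uu by (auto simp: nbrs_def)
      ultimately show False using uu by (auto simp: S_def)
    qed
  qed
qed

lemma coh_h2_nh:
  assumes y: "y \<in> verts C" "3 \<le> ord C y" "NH y"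
  shows "point_of_coherence D C h2 y"
proof -
  define d where "d = mk (phi y) y"
  have dV: "d \<in> verts D" using mk_nh[OF y(3)] by (simp add: d_def)
  have dord: "ord D d = ord C y" using ord_nh[OF dV] y by (simp add: d_def)
  show ?thesis
  proof (rule coh_lemma[OF TD TC h2_mono y(1) y(2) dV _ dord])
    show "h2 d = y" by (simp add: d_def)
  next
    fix u u' w w' assume uu: "u \<in> nbrs C y" "u' \<in> nbrs C y" "u \<noteq> u'" "w \<in> verts D" "w' \<in> verts D"
      "h2 w = u" "h2 w' = u'"
    define K where "K = cmp C (verts C - {y}) u"
    have uK: "u \<in> K" using uu cmp_self[of u "verts C - {y}" C] by (auto simp: K_def nbrs_def)
    have nbK: "v \<in> nbrs C y \<Longrightarrow> v \<in> K \<Longrightarrow> v = u" for v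
      using tree_comp_nbr_unique[OF TC y(1) uu(1)] by (auto simp: K_def)
    define S where "S = {m \<in> verts D. h2 m \<in> K}"
    have closed: "r \<in> S" if qr: "(q, r) \<in> edges D" "q \<in> S" "r \<in> verts D - {d}" for q r
    proof -
      have eC: "(h2 q, h2 r) \<in> edges C" using eD_hom2[OF qr(1)] .
      have "h2 r \<noteq> y"
      proof
        assume "h2 r = y"
        then have "r = d" using vD_nh_unique[OF dV _ _] qr y(3) by (metis DiffD1 d_def h_mk(2))
        then show False using qr by simp
      qed
      then have "h2 r \<in> K" using cmp_closed[of "h2 q" C "verts C - {y}" u "h2 r"] qr eC vD_props
        by (auto simp: S_def K_def)
      then show ?thesis using qr by (simp add: S_def)
    qed
    show "(w, w') \<notin> (induced_rel D (verts D - {d}))\<^sup>*"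
    proof
      assume p: "(w, w') \<in> (induced_rel D (verts D - {d}))\<^sup>*"
      have wS: "w \<in> S" using uu uK by (auto simp: S_def)
      have "w' \<in> S" using closed_path[OF p wS] closed by blast
      moreover have "u' \<notin> K" using nbK uu by auto
      ultimately show False using uu by (auto simp: S_def)
    qed
  qed
qed

end


lemma comp_path_closed:
  assumes "K \<in> components G S" "v \<in> K" "(v, v') \<in> (induced_rel G S)\<^sup>*"
  shows "v' \<in> K"
  using assms(3,2)
proof (induction rule: rtrancl_induct)
  case (step y z)
  then show ?case using comp_closed2[OF assms(1)] by (auto simp: induced_rel_def)
qed simp

context amal
begin

lemma coh_h2_hub:
  assumes y: "y \<in> verts C" "3 \<le> ord C y" "\<not> NH y"
  shows "point_of_coherence D C h2 y"
proof -
  define a where "a = g y"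
  have aA: "a \<in> verts A" using gV[OF y(1)] by (simp add: a_def)
  have yh: "y = hub a" using hub_NH[OF y(1,3)] by (simp add: a_def)
  have hk: "hubok a y" using hub_ok[OF aA] yh by simp
  obtain pg where oy: "ord C y = ord A a"
    and pg: "bij_betw pg (components A (verts A - {a})) (components C (verts C - {y}))"
    and inclg: "\<forall>Ai\<in>components A (verts A - {a}). {x \<in> verts C. g x \<in> Ai} \<subseteq> pg Ai"
    using hk y(2) unfolding hubok_def by blast
  have a3: "3 \<le> ord A a" using oy y(2) by simp
  obtain b pf where b: "b \<in> verts B" "f b = a" "ord B b = ord A a"
    and pf: "bij_betw pf (components A (verts A - {a})) (components B (verts B - {b}))"
    and inclf: "\<forall>Ai\<in>components A (verts A - {a}). {x \<in> verts B. f x \<in> Ai} \<subseteq> pf Ai"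
    using fcoh aA a3 unfolding coherent_def point_of_coherence_def by blast
  let ?SA = "verts A - {a}" and ?SB = "verts B - {b}" and ?SC = "verts C - {y}"
  define d where "d = mk b y"
  have dV: "d \<in> verts D" using mk_hub2[OF b(1) _ y(3) y(1)] b(2) by (simp add: d_def a_def)
  have dord: "ord D d = ord C y" using ord_hub[OF dV] y(3) b oy by (simp add: d_def)
  have F1C: "z \<in> pg Ak \<longleftrightarrow> g z \<in> Ak" if "Ak \<in> components A ?SA" "z \<in> verts C" "g z \<noteq> a" for Ak z
    using coh_comp_iff[OF TA TC ge aA pg inclg that] .
  have F1B: "z \<in> pf Ak \<longleftrightarrow> f z \<in> Ak" if "Ak \<in> components A ?SA" "z \<in> verts B" "f z \<noteq> a" for Ak z
    using coh_comp_iff[OF TA TB fe aA pf inclf that] .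
  have pgc: "pg Ak \<in> components C ?SC" if "Ak \<in> components A ?SA" for Ak
    using pg that unfolding bij_betw_def by auto
  have pfc: "pf Ak \<in> components B ?SB" if "Ak \<in> components A ?SA" for Ak
    using pf that unfolding bij_betw_def by auto
  have pginj: "Ak = Aj" if "Ak \<in> components A ?SA" "Aj \<in> components A ?SA" "z \<in> pg Ak" "z \<in> pg Aj" for Ak Aj z
  proof -
    have "pg Ak = pg Aj" using comps_share[OF GC pgc[OF that(1)] pgc[OF that(2)] that(3,4)] .
    then show ?thesis using pg that(1,2) unfolding bij_betw_def inj_on_def by blast
  qed
  have pfinj: "Ak = Aj" if "Ak \<in> components A ?SA" "Aj \<in> components A ?SA" "z \<in> pf Ak" "z \<in> pf Aj" for Ak Aj z
  proof -
    have "pf Ak = pf Aj" using comps_share[OF GB pfc[OF that(1)] pfc[OF that(2)] that(3,4)] .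
    then show ?thesis using pf that(1,2) unfolding bij_betw_def inj_on_def by blast
  qed
  define cA where "cA a' = cmp A ?SA a'" for a'
  have cAc: "a' \<in> nbrs A a \<Longrightarrow> cA a' \<in> components A ?SA \<and> a' \<in> cA a'" for a'
    using cmp_self[of a' ?SA A] unfolding cA_def components_comp by (auto simp: nbrs_def)
  have F2B: "be a a' = b \<or> be a a' \<in> pf (cA a')" if a': "a' \<in> nbrs A a" for a'
  proof -
    have n: "a \<in> nbrs A a'" using nbrs_sym[OF a'] .
    have ne: "a' \<noteq> a" using a' by (auto simp: nbrs_def)
    have "be a' a \<in> pf (cA a')" using F1B[of "cA a'" "be a' a"] cAc[OF a'] be_edge[OF n] ne by auto
    moreover have "(be a' a, be a a') \<in> edges B" using Bsym[OF be_edge(1)[OF a']] .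
    ultimately show ?thesis using comp_closed2[OF pfc[OF conjunct1[OF cAc[OF a']]]] be_edge(3)[OF a'] by blast
  qed
  have F2C: "ge a a' = y \<or> ge a a' \<in> pg (cA a')" if a': "a' \<in> nbrs A a" for a'
  proof -
    have n: "a \<in> nbrs A a'" using nbrs_sym[OF a'] .
    have ne: "a' \<noteq> a" using a' by (auto simp: nbrs_def)
    have "ge a' a \<in> pg (cA a')" using F1C[of "cA a'" "ge a' a"] cAc[OF a'] ge_edge[OF n] ne by auto
    moreover have "(ge a' a, ge a a') \<in> edges C" using Csym[OF ge_edge(1)[OF a']] .
    ultimately show ?thesis using comp_closed2[OF pgc[OF conjunct1[OF cAc[OF a']]]] ge_edge(3)[OF a'] by blast
  qed
  have F3: "y' \<in> pg (cA (nb y'))" if y': "NH y'" "g y' = a" for y'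
  proof -
    have nbn: "nb y' \<in> nbrs A a" using nb_prop(1)[OF y'(1)] y'(2) by simp
    have "ge a (nb y') \<noteq> y" using nb_prop(2)[OF y'(1)] y'(2) yh by simp
    then have gin: "ge a (nb y') \<in> pg (cA (nb y'))" using F2C[OF nbn] by simp
    have "(y', ge a (nb y')) \<in> (induced_rel C (Cg a - {y}))\<^sup>*" using nb_prop(3)[OF y'(1)] y'(2) yh by simp
    then have p1: "(ge a (nb y'), y') \<in> (induced_rel C (Cg a - {y}))\<^sup>*" using induced_sym[OF GC] by blast
    have "Cg a - {y} \<subseteq> ?SC" by (auto simp: Cg_def)
    then have "(ge a (nb y'), y') \<in> (induced_rel C ?SC)\<^sup>*" using induced_mono[where G=C, OF _ p1] by blast
    then show ?thesis using comp_path_closed[OF pgc[OF conjunct1[OF cAc[OF nbn]]] gin] by blast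
  qed
  show ?thesis
  proof (rule coh_lemma[OF TD TC h2_mono y(1) y(2) dV _ dord])
    show "h2 d = y" by (simp add: d_def)
  next
    fix u u' w w' assume uu: "u \<in> nbrs C y" "u' \<in> nbrs C y" "u \<noteq> u'" "w \<in> verts D" "w' \<in> verts D"
      "h2 w = u" "h2 w' = u'"
    define Q where "Q = cmp C ?SC u"
    have QC: "Q \<in> components C ?SC" using uu unfolding Q_def components_comp by (auto simp: nbrs_def)
    obtain Ai where Ai: "Ai \<in> components A ?SA" "pg Ai = Q"
      using pg QC unfolding bij_betw_def by (metis imageE)
    define Pu where "Pu = pf Ai"
    have PuB: "Pu \<in> components B ?SB" using pfc[OF Ai(1)] by (simp add: Pu_def)
    have uQ: "u \<in> Q" using uu cmp_self[of u ?SC C] by (auto simp: Q_def nbrs_def)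
    have nbQ: "v \<in> nbrs C y \<Longrightarrow> v \<in> Q \<Longrightarrow> v = u" for v
      using tree_comp_nbr_unique[OF TC y(1) uu(1)] by (auto simp: Q_def)
    have QSC: "Q \<subseteq> ?SC" using comp_sub2[OF QC] .
    have PuSB: "Pu \<subseteq> ?SB" using comp_sub2[OF PuB] .
    define S where "S = {m \<in> verts D. m \<noteq> d \<and> (h2 m \<in> Q \<or> h1 m \<in> Pu)}"
    have closed: "r \<in> S" if qr: "(q, r) \<in> edges D" "q \<in> S" "r \<in> verts D - {d}" for q r
    proof -
      have eB: "(h1 q, h1 r) \<in> edges B" and eC: "(h2 q, h2 r) \<in> edges C"
        using eD_hom1[OF qr(1)] eD_hom2[OF qr(1)] by auto
      have qv: "q \<in> verts D" "r \<in> verts D" "r \<noteq> d" using qr by (auto simp: S_def)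
      have gfr: "f (h1 r) = g (h2 r)" "f (h1 q) = g (h2 q)" using vD_props qv by auto
      have rd: "h1 r = b \<Longrightarrow> h2 r = y \<Longrightarrow> False" using qv n_eq by (metis d_def h_mk)
      show ?thesis
      proof (cases "h2 q \<in> Q")
        case True
        have qy: "h2 q \<noteq> y" using True QSC by auto
        show ?thesis
        proof (cases "h2 r = y")
          case False
          then have "h2 r \<in> Q" using comp_closed2[OF QC True eC] vD_props[OF qv(2)] by simp
          then show ?thesis using qv by (simp add: S_def)
        next
          case ry: True
          have fr: "f (h1 r) = a" using gfr ry by (simp add: a_def)
          have rb: "h1 r \<noteq> b" using rd ry by blast
          have rSB: "h1 r \<in> ?SB" using rb vD_props[OF qv(2)] by simp
          have "h1 r \<in> Pu"
          proof (cases "g (h2 q) = a")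
            case True
            have hq: "h1 q = h1 r" using qr(1) qy ry True by (auto simp: eD_iff a_def)
            have nq: "NH (h2 q)" using True qy yh vD_props[OF qv(1)] by (simp add: NH_def)
            have nbn: "nb (h2 q) \<in> nbrs A a" using nb_prop(1)[OF nq] True by simp
            have "h2 q \<in> pg (cA (nb (h2 q)))" using F3[OF nq True] .
            then have "cA (nb (h2 q)) = Ai" using pginj[OF conjunct1[OF cAc[OF nbn]] Ai(1)] True Ai(2) \<open>h2 q \<in> Q\<close> by blast
            moreover have "h1 q = be a (nb (h2 q))" using vD_nh[OF qv(1) nq] True by (simp add: phi_def)
            ultimately show ?thesis using F2B[OF nbn] hq rb by (simp add: Pu_def)
          next
            case False
            have "g (h2 q) \<in> Ai" using F1C[OF Ai(1) _ False] \<open>h2 q \<in> Q\<close> Ai(2) vD_props[OF qv(1)] by simp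
            then have "h1 q \<in> Pu" using F1B[OF Ai(1)] gfr False vD_props[OF qv(1)] by (simp add: Pu_def)
            then show ?thesis using comp_closed2[OF PuB _ eB rSB] by simp
          qed
          then show ?thesis using qv by (simp add: S_def)
        qed
      next
        case False
        then have qP: "h1 q \<in> Pu" using qr by (simp add: S_def)
        have qb: "h1 q \<noteq> b" using qP PuSB by auto
        show ?thesis
        proof (cases "h1 r = b")
          case False
          then have "h1 r \<in> Pu" using comp_closed2[OF PuB qP eB] vD_props[OF qv(2)] by simp
          then show ?thesis using qv by (simp add: S_def)
        next
          case rb: True
          have ry: "h2 r \<noteq> y" using rd rb by blast
          have gr: "g (h2 r) = a" using gfr rb b(2) by simp
          have nr: "NH (h2 r)" using gr ry yh vD_props[OF qv(2)] by (simp add: NH_def)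
          have hne: "h2 q \<noteq> h2 r"
          proof
            assume "h2 q = h2 r"
            then have "q = r" using vD_nh_unique[OF qv(2,1)] nr by metis
            then show False using qb rb by simp
          qed
          have gne: "g (h2 q) \<noteq> a"
          proof
            assume "g (h2 q) = a"
            then have "h1 q = h1 r" using qr(1) hne gr by (auto simp: eD_iff)
            then show False using qb rb by simp
          qed
          have "f (h1 q) \<in> Ai" using F1B[OF Ai(1)] qP gfr gne vD_props[OF qv(1)] by (simp add: Pu_def)
          then have "h2 q \<in> Q" using F1C[OF Ai(1)] gfr gne vD_props[OF qv(1)] Ai(2) by simp
          then have "h2 r \<in> Q" using comp_closed2[OF QC _ eC] ry vD_props[OF qv(2)] by simp
          then show ?thesis using qv by (simp add: S_def)
        qed
      qed
    qed
    show "(w, w') \<notin> (induced_rel D (verts D - {d}))\<^sup>*"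
    proof
      assume p: "(w, w') \<in> (induced_rel D (verts D - {d}))\<^sup>*"
      have wS: "w \<in> S" using uu uQ by (auto simp: S_def d_def nbrs_def)
      have w'S: "w' \<in> S" using closed_path[OF p wS] closed by blast
      have u'Q: "u' \<notin> Q" using nbQ uu by auto
      then have hP: "h1 w' \<in> Pu" using w'S uu by (simp add: S_def)
      define Q' where "Q' = cmp C ?SC u'"
      have Q'C: "Q' \<in> components C ?SC" using uu unfolding Q'_def components_comp by (auto simp: nbrs_def)
      obtain Aj where Aj: "Aj \<in> components A ?SA" "pg Aj = Q'"
        using pg Q'C unfolding bij_betw_def by (metis imageE)
      have u'Q': "u' \<in> Q'" using uu cmp_self[of u' ?SC C] by (auto simp: Q'_def nbrs_def)
      have AiAj: "Ai \<noteq> Aj" using u'Q u'Q' Ai Aj by auto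
      have u'C: "u' \<in> verts C" "u' \<noteq> y" using uu by (auto simp: nbrs_def)
      have fw: "f (h1 w') = g u'" using vD_props[OF uu(5)] uu(7) by simp
      show False
      proof (cases "g u' = a")
        case False
        have "g u' \<in> Ai" using F1B[OF Ai(1)] hP fw False vD_props[OF uu(5)] by (simp add: Pu_def)
        moreover have "g u' \<in> Aj" using F1C[OF Aj(1) u'C(1) False] u'Q' Aj(2) by simp
        ultimately show False using comps_share[OF GA Ai(1) Aj(1)] AiAj by blast
      next
        case True
        have nu: "NH u'" using True u'C yh by (simp add: NH_def)
        have nbn: "nb u' \<in> nbrs A a" using nb_prop(1)[OF nu] True by simp
        have "u' \<in> pg (cA (nb u'))" using F3[OF nu True] .
        then have cAj: "cA (nb u') = Aj" using pginj[OF conjunct1[OF cAc[OF nbn]] Aj(1)] u'Q' Aj(2) by blast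
        have "h1 w' = be a (nb u')" using vD_nh[OF uu(5)] nu uu(7) True by (simp add: phi_def)
        moreover have "h1 w' \<noteq> b" using hP PuSB by auto
        ultimately have "h1 w' \<in> pf Aj" using F2B[OF nbn] cAj by simp
        then have "Aj = Ai" using pfinj[OF Aj(1) Ai(1)] hP by (simp add: Pu_def)
        then show False using AiAj by simp
      qed
    qed
  qed
qed

lemma coh_h2: "coherent D C h2"
  unfolding coherent_def using coh_h2_nh coh_h2_hub by blast

lemma coh_h1': "coherent D B h1"
  unfolding coherent_def using coh_h1 by blast

lemma comm: "n \<in> verts D \<Longrightarrow> f (h1 n) = g (h2 n)"
  using vD_props by blast

theorem amalgam:
  "\<exists>D\<in>GP P. \<exists>h1 h2. GP_mor P D B h1 \<and> GP_mor P D C h2 \<and> (\<forall>d\<in>verts D. f (h1 d) = g (h2 d))"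
proof -
  have "GP_mor P D B h1" unfolding GP_mor_def using DGP BGP h1_mono coh_h1' by auto
  moreover have "GP_mor P D C h2" unfolding GP_mor_def using DGP CGP h2_mono coh_h2 by auto
  ultimately show ?thesis using DGP comm by blast
qed

end


lemma const_mor:
  assumes X: "X \<in> GP P" and T: "T \<in> GP P" and t: "verts T = {t}"
  shows "GP_mor P X T (\<lambda>_. t)"
proof -
  have TX: "is_tree X" using X GP_tree by auto
  have GX: "is_graph X" using TX graph_tree by auto
  have GT: "is_graph T" using T GP_tree graph_tree by auto
  have cX: "connected_in X (verts X)" using TX unfolding is_tree_def by auto
  then obtain x0 where x0: "x0 \<in> verts X" unfolding connected_in_def by auto
  have tt: "(t, t) \<in> edges T" using is_graphD(3)[OF GT] t by auto
  have epi: "epi X T (\<lambda>_. t)" unfolding epi_def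
  proof (intro conjI ballI)
    show "(\<lambda>_. t) ` verts X = verts T" using x0 t by auto
  next
    fix a1 a2 assume "a1 \<in> verts T" "a2 \<in> verts T"
    then have "a1 = t" "a2 = t" using t by auto
    then show "((a1, a2) \<in> edges T) = (\<exists>b1\<in>verts X. \<exists>b2\<in>verts X. t = a1 \<and> t = a2 \<and> (b1, b2) \<in> edges X)"
      using tt x0 is_graphD(3)[OF GX x0] by auto
  qed
  have mono: "monotone_epi X T (\<lambda>_. t)" unfolding monotone_epi_def
    using epi cX t by auto
  have "ord T t = 0" unfolding ord_def using t by auto
  then have coh: "coherent X T (\<lambda>_. t)" unfolding coherent_def using t by auto
  show ?thesis unfolding GP_mor_def using X T mono coh by auto
qed

definition E2 :: graph where "E2 = ({0, 1}, {0, 1} \<times> {0, 1})"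

lemma E2_verts: "verts E2 = {0, 1}" and E2_edges: "edges E2 = {0, 1} \<times> {0, 1}"
  by (simp_all add: E2_def verts_def edges_def)

lemma E2_nbrs: "v \<in> {0, 1} \<Longrightarrow> nbrs E2 v = {1 - v}"
  unfolding nbrs_def E2_verts E2_edges by auto

lemma E2_ord: "v \<in> verts E2 \<Longrightarrow> ord E2 v = 1"
  using E2_nbrs E2_verts by (simp add: ord_nbrs)

lemma E2_GP: "E2 \<in> GP P"
proof -
  have G: "is_graph E2" unfolding is_graph_def E2_verts E2_edges by auto
  have c: "connected_in E2 (verts E2)" unfolding connected_in_def E2_verts induced_rel_def E2_edges
    by (auto intro: r_into_rtrancl)
  have nc: "\<not> has_cycle E2"
  proof
    assume "has_cycle E2"
    then obtain vs where vs: "3 \<le> length vs" "distinct vs" "set vs \<subseteq> {0, 1::nat}"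
      unfolding has_cycle_def E2_verts by blast
    have "length vs = card (set vs)" using distinct_card[OF vs(2)] by simp
    also have "\<dots> \<le> card {0 :: nat, 1}" using vs(3) by (intro card_mono) auto
    finally show False using vs(1) by simp
  qed
  show ?thesis unfolding GP_def is_tree_def using G c nc E2_ord by auto
qed

lemma leaf_mor:
  assumes X: "X \<in> GP P" and c2: "2 \<le> card (verts X)"
  shows "\<exists>k. GP_mor P X E2 k"
proof -
  have TX: "is_tree X" using X GP_tree by auto
  have GX: "is_graph X" using TX graph_tree by auto
  obtain v where v: "v \<in> verts X" using c2 by (metis card.empty ex_in_conv not_numeral_le_zero)
  obtain l where l: "l \<in> verts X" "l \<noteq> v" "ord X l = 1" "connected_in X (verts X - {l})"
    using leaf_lemma[OF TX v c2] by blast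
  obtain p where p: "nbrs X l = {p}" using l(3) by (auto simp: ord_nbrs card_1_singleton_iff)
  have pl: "(l, p) \<in> edges X" "p \<noteq> l" "p \<in> verts X" using p by (auto simp: nbrs_def)
  define k where "k x = (if x = l then 1 else 0 :: nat)" for x
  have epi: "epi X E2 k" unfolding epi_def E2_verts E2_edges
  proof (intro conjI ballI)
    show "k ` verts X = {0, 1}"
    proof
      show "k ` verts X \<subseteq> {0, 1}" by (auto simp: k_def)
      have "0 \<in> k ` verts X" using v l(2) by (intro image_eqI[of _ k v]) (auto simp: k_def)
      moreover have "1 \<in> k ` verts X" using l(1) by (intro image_eqI[of _ k l]) (auto simp: k_def)
      ultimately show "{0, 1} \<subseteq> k ` verts X" by auto
    qed
  next
    fix a1 a2 :: nat assume a: "a1 \<in> {0, 1}" "a2 \<in> {0, 1}"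
    have r: "(x, x) \<in> edges X" if "x \<in> verts X" for x using is_graphD(3)[OF GX that] .
    have s: "(p, l) \<in> edges X" using is_graphD(4)[OF GX pl(1)] .
    have kv: "k v = 0" "k l = 1" "k p = 0" using l(2) pl(2) by (auto simp: k_def)
    have e00: "\<exists>b1\<in>verts X. \<exists>b2\<in>verts X. k b1 = 0 \<and> k b2 = 0 \<and> (b1, b2) \<in> edges X"
      using v kv r[OF v] by blast
    have e11: "\<exists>b1\<in>verts X. \<exists>b2\<in>verts X. k b1 = 1 \<and> k b2 = 1 \<and> (b1, b2) \<in> edges X"
      using l(1) kv r[OF l(1)] by blast
    have e10: "\<exists>b1\<in>verts X. \<exists>b2\<in>verts X. k b1 = 1 \<and> k b2 = 0 \<and> (b1, b2) \<in> edges X"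
      using l(1) pl kv by blast
    have e01: "\<exists>b1\<in>verts X. \<exists>b2\<in>verts X. k b1 = 0 \<and> k b2 = 1 \<and> (b1, b2) \<in> edges X"
      using l(1) pl s kv by blast
    show "((a1, a2) \<in> {0, 1} \<times> {0, 1}) = (\<exists>b1\<in>verts X. \<exists>b2\<in>verts X. k b1 = a1 \<and> k b2 = a2 \<and> (b1, b2) \<in> edges X)"
      using a e00 e01 e10 e11 by auto
  qed
  have mono: "monotone_epi X E2 k" unfolding monotone_epi_def
  proof (intro conjI ballI epi)
    fix a assume a: "a \<in> verts E2"
    show "connected_in X {b \<in> verts X. k b = a}"
    proof (cases "a = 1")
      case True
      then have "{b \<in> verts X. k b = a} = {l}" using l by (auto simp: k_def)
      then show ?thesis using l unfolding connected_in_def by auto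
    next
      case False
      then have "a = 0" using a E2_verts by auto
      then have "{b \<in> verts X. k b = a} = verts X - {l}" by (auto simp: k_def)
      then show ?thesis using l by simp
    qed
  qed
  have coh: "coherent X E2 k" unfolding coherent_def using E2_ord by auto
  show ?thesis unfolding GP_mor_def using X E2_GP mono coh by blast
qed

lemma single_vertex:
  assumes A: "A \<in> GP P" and a: "a \<in> verts A" "ord A a = 0"
  shows "verts A = {a}"
proof (rule ccontr)
  assume "verts A \<noteq> {a}"
  then obtain z where "z \<in> verts A" "z \<noteq> a" using a by blast
  then obtain t where "t \<in> nbrs A a" using tree_has_nbr[OF GP_tree[OF A] a(1)] by blast
  moreover have "finite (nbrs A a)" using finite_nbrs[OF graph_tree[OF GP_tree[OF A]]] .
  ultimately have "ord A a > 0" by (auto simp: ord_nbrs card_gt_0_iff)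
  then show False using a by simp
qed

lemma amalgamation:
  assumes P3: "\<forall>p\<in>P. 3 \<le> p" and A: "A \<in> GP P" and B: "B \<in> GP P" and C: "C \<in> GP P"
    and f: "GP_mor P B A f" and g: "GP_mor P C A g"
  shows "\<exists>D\<in>GP P. \<exists>h1 h2. GP_mor P D B h1 \<and> GP_mor P D C h2 \<and> (\<forall>d\<in>verts D. f (h1 d) = g (h2 d))"
proof (cases "\<forall>a\<in>verts A. 1 \<le> ord A a")
  case True
  then show ?thesis using amal.amalgam[OF amal.intro[OF P3 A f g True]] by blast
next
  case False
  then obtain a where a: "a \<in> verts A" "ord A a = 0" by force
  have VA: "verts A = {a}" using single_vertex[OF A a] .
  have fV: "\<And>x. x \<in> verts B \<Longrightarrow> f x = a" using f VA unfolding GP_mor_def monotone_epi_def epi_def by blast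
  have gV: "\<And>x. x \<in> verts C \<Longrightarrow> g x = a" using g VA unfolding GP_mor_def monotone_epi_def epi_def by blast
  have ne: "verts X \<noteq> {}" "finite (verts X)" if "X \<in> GP P" for X
    using that GP_tree graph_tree is_graphD(1) unfolding is_tree_def connected_in_def by blast+
  have card1: "\<exists>t. verts X = {t}" if "X \<in> GP P" "\<not> 2 \<le> card (verts X)" for X
  proof -
    have "card (verts X) \<noteq> 0" using ne[OF that(1)] by simp
    then have "card (verts X) = 1" using that(2) by simp
    then show ?thesis by (simp add: card_1_singleton_iff)
  qed
  show ?thesis
  proof (cases "2 \<le> card (verts B)")
    case False
    then obtain b0 where b0: "verts B = {b0}" using card1 B by blast
    have "GP_mor P C B (\<lambda>_. b0)" using const_mor[OF C B b0] .
    moreover have "GP_mor P C C id" using id_mor[OF C] .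
    moreover have "\<forall>d\<in>verts C. f b0 = g (id d)" using fV gV b0 by auto
    ultimately show ?thesis using C by blast
  next
    case B2: True
    show ?thesis
    proof (cases "2 \<le> card (verts C)")
      case False
      then obtain c0 where c0: "verts C = {c0}" using card1 C by blast
      have "GP_mor P B C (\<lambda>_. c0)" using const_mor[OF B C c0] .
      moreover have "GP_mor P B B id" using id_mor[OF B] .
      moreover have "\<forall>d\<in>verts B. f (id d) = g c0" using fV gV c0 by auto
      ultimately show ?thesis using B by blast
    next
      case C2: True
      obtain kB where kB: "GP_mor P B E2 kB" using leaf_mor[OF B B2] by blast
      obtain kC where kC: "GP_mor P C E2 kC" using leaf_mor[OF C C2] by blast
      have o: "\<forall>v\<in>verts E2. 1 \<le> ord E2 v" using E2_ord by simp
      obtain D h1 h2 where D: "D \<in> GP P" "GP_mor P D B h1" "GP_mor P D C h2"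
        using amal.amalgam[OF amal.intro[OF P3 E2_GP kB kC o]] by blast
      have "\<forall>d\<in>verts D. f (h1 d) = g (h2 d)"
      proof
        fix d assume "d \<in> verts D"
        then have "h1 d \<in> verts B" "h2 d \<in> verts C"
          using D unfolding GP_mor_def monotone_epi_def epi_def by blast+
        then show "f (h1 d) = g (h2 d)" using fV gV by simp
      qed
      then show ?thesis using D by blast
    qed
  qed
qed

definition ptG :: graph where "ptG = ({0}, {(0, 0)})"

lemma ptG_GP: "ptG \<in> GP P"
proof -
  have vv: "verts ptG = {0}" "edges ptG = {(0, 0)}" by (simp_all add: ptG_def verts_def edges_def)
  have G: "is_graph ptG" unfolding is_graph_def vv by auto
  have c: "connected_in ptG (verts ptG)" unfolding connected_in_def vv by auto
  have nc: "\<not> has_cycle ptG"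
  proof
    assume "has_cycle ptG"
    then obtain vs where vs: "3 \<le> length vs" "distinct vs" "set vs \<subseteq> {0::nat}"
      unfolding has_cycle_def vv by blast
    have "length vs = card (set vs)" using distinct_card[OF vs(2)] by simp
    also have "\<dots> \<le> card {0 :: nat}" using vs(3) by (intro card_mono) auto
    finally show False using vs(1) by simp
  qed
  have "ord ptG 0 = 0" unfolding ord_def vv by auto
  then show ?thesis unfolding GP_def is_tree_def using G c nc vv by auto
qed

theorem main_result:
  fixes P :: "nat set"
  assumes "\<forall>p\<in>P. 3 \<le> p"
  shows "(\<forall>A\<in>GP P. \<forall>B\<in>GP P. \<forall>C\<in>GP P. \<forall>f g. GP_mor P B A f \<and> GP_mor P C A g \<longrightarrow>
            (\<exists>D\<in>GP P. \<exists>h1 h2. GP_mor P D B h1 \<and> GP_mor P D C h2 \<and>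
               (\<forall>d\<in>verts D. f (h1 d) = g (h2 d))))
         \<and> proj_fraisse_family (GP P) (GP_mor P)"
proof -
  have am: "\<forall>A\<in>GP P. \<forall>B\<in>GP P. \<forall>C\<in>GP P. \<forall>f g. GP_mor P B A f \<and> GP_mor P C A g \<longrightarrow>
            (\<exists>D\<in>GP P. \<exists>h1 h2. GP_mor P D B h1 \<and> GP_mor P D C h2 \<and>
               (\<forall>d\<in>verts D. f (h1 d) = g (h2 d)))"
    using amalgamation[OF assms] by blast
  have jp: "\<forall>A\<in>GP P. \<forall>B\<in>GP P. \<exists>D\<in>GP P. \<exists>f g. GP_mor P D A f \<and> GP_mor P D B g"
  proof (intro ballI)
    fix A B assume A: "A \<in> GP P" and B: "B \<in> GP P"
    have pv: "verts ptG = {0}" by (simp add: ptG_def verts_def)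
    have "GP_mor P A ptG (\<lambda>_. 0)" "GP_mor P B ptG (\<lambda>_. 0)"
      using const_mor[OF A ptG_GP pv] const_mor[OF B ptG_GP pv] by auto
    then show "\<exists>D\<in>GP P. \<exists>f g. GP_mor P D A f \<and> GP_mor P D B g"
      using amalgamation[OF assms ptG_GP A B] by blast
  qed
  have ff: "proj_fraisse_family (GP P) (GP_mor P)"
    unfolding proj_fraisse_family_def
  proof (intro conjI)
    show "\<forall>G\<in>GP P. is_graph G" using GP_tree graph_tree by blast
    show "\<forall>B A f. GP_mor P B A f \<longrightarrow> B \<in> GP P \<and> A \<in> GP P \<and> epi B A f"
      unfolding GP_mor_def monotone_epi_def by blast
    show "\<exists>S. countable S \<and> S \<subseteq> GP P \<and> (\<forall>A\<in>GP P. \<exists>A'\<in>S. graph_iso A A')"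
    proof (intro exI[of _ "GP P"] conjI ballI)
      show "countable (GP P)" by (rule countable_GP)
      fix A assume "A \<in> GP P"
      moreover have "graph_iso A A" unfolding graph_iso_def by (intro exI[of _ id]) auto
      ultimately show "\<exists>A'\<in>GP P. graph_iso A A'" by blast
    qed simp
    show "\<forall>A\<in>GP P. GP_mor P A A id" using id_mor by blast
    show "\<forall>A B D f g. GP_mor P B A f \<and> GP_mor P D B g \<longrightarrow> GP_mor P D A (f \<circ> g)"
      using comp_mor by blast
    show "\<forall>A\<in>GP P. \<forall>B\<in>GP P. \<exists>D\<in>GP P. \<exists>f g. GP_mor P D A f \<and> GP_mor P D B g" by (rule jp)
    show "proj_amalgamation (GP P) (GP_mor P)" unfolding proj_amalgamation_def using am by blast
  qed
  show ?thesis using am ff by blast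
qed


theorem mainTheorem6:
  fixes P :: "nat set"
  assumes "\<forall>p\<in>P. 3 \<le> p"
  shows "(\<forall>A\<in>GP P. \<forall>B\<in>GP P. \<forall>C\<in>GP P. \<forall>f g. GP_mor P B A f \<and> GP_mor P C A g \<longrightarrow>
            (\<exists>D\<in>GP P. \<exists>h1 h2. GP_mor P D B h1 \<and> GP_mor P D C h2 \<and>
               (\<forall>d\<in>verts D. f (h1 d) = g (h2 d))))
         \<and> proj_fraisse_family (GP P) (GP_mor P)"
  using main_result[OF assms] .

end
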